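(* Let $\alpha_1,\alpha_2>0$, $\beta_j\in(0,\alpha_j)$ and $\gamma_j:=\alpha_j-\beta_j$, $j=1,2$. If $\mu_j\in\mathcal M_{\beta_j}(\mathbb R_+)$, $j=1,2$, and $\mu=\mu_1\otimes_{\alpha_1,\alpha_2}\mu_2$, then $\mu\in\mathcal M_{\beta_1+\beta_2}(\mathbb R_+)$ and $$\|\mu\|_{\beta_1+\beta_2}\le\min(A_1,A_2)\,\|\mu_1\|_{\beta_1}\|\mu_2\|_{\beta_2},$$ where $$A_1=\frac{\beta_1^{\beta_1}\beta_2^{\beta_2}}{(\beta_1+\beta_2)^{\beta_1+\beta_2}}\cdot\frac{B(\gamma_1,\gamma_2)}{B(\alpha_1,\alpha_2)},\qquad A_2=\frac{\gamma_1^{\gamma_1}\gamma_2^{\gamma_2}}{(\gamma_1+\gamma_2)^{\gamma_1+\gamma_2}}\cdot\frac{B(\beta_1,\beta_2)}{B(\alpha_1,\alpha_2)}.$$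
   Context: $\mathbb R_+=[0,\infty)$. For $\alpha\ge0$, $\mathcal M_\alpha(\mathbb R_+)$ is the space of complex Radon measures $\mu$ on $\mathbb R_+$ with $\|\mu\|_\alpha:=\int_{\mathbb R_+}(1+t)^{-\alpha}|\mu|(dt)<\infty$ (note $\mathcal M_\beta(\mathbb R_+)\subset\mathcal M_\alpha(\mathbb R_+)$ for $\beta\le\alpha$). $B$ is the beta function. For $\mu_j\in\mathcal M_{\alpha_j}(\mathbb R_+)$, the Stieltjes convolution $\mu_1\otimes_{\alpha_1,\alpha_2}\mu_2$ is the measure $u(\tau)\,d\tau+\mu_1(\{\tau\})\mu_2(d\tau)$, where for a.e. $\tau\ge0$ $$B(\alpha_1,\alpha_2)u(\tau)=\int_{(\tau,\infty)}\int_{[0,\tau)}\frac{(\tau-s)^{\alpha_2-1}(t-\tau)^{\alpha_1-1}}{(t-s)^{\alpha_1+\alpha_2-1}}\mu_1(ds)\mu_2(dt)+\int_{(\tau,\infty)}\int_{[0,\tau)}\frac{(\tau-s)^{\alpha_1-1}(t-\tau)^{\alpha_2-1}}{(t-s)^{\alpha_1+\alpha_2-1}}\mu_2(ds)\mu_1(dt).$$ *)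

theory Defs
  imports "HOL-Analysis.Analysis"
begin

text \<open>A complex Radon measure mu on R_+ is represented in polar form: mu(dt) = h t nu(dt),
  where nu is a locally finite positive Borel measure on the reals, concentrated on [0,inf),
  and h is Borel with |h| = 1. Then nu is the total variation |mu|.\<close>
definition cRadon :: "real measure \<Rightarrow> (real \<Rightarrow> complex) \<Rightarrow> bool" where
  "cRadon \<nu> h \<longleftrightarrow> sets \<nu> = sets borel \<and> emeasure \<nu> {..<0} = 0 \<and>
     (\<forall>a. emeasure \<nu> {0..a} < \<infinity>) \<and> h \<in> borel_measurable borel \<and> (\<forall>t. cmod (h t) = 1)"

definition wnorm :: "real \<Rightarrow> real measure \<Rightarrow> ennreal" where
  "wnorm \<alpha> \<nu> = (\<integral>\<^sup>+ t. ennreal ((1 + t) powr (- \<alpha>)) \<partial>\<nu>)"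

definition ptmass :: "real measure \<Rightarrow> (real \<Rightarrow> complex) \<Rightarrow> real \<Rightarrow> complex" where
  "ptmass \<nu> h \<tau> = h \<tau> * complex_of_real (measure \<nu> {\<tau>})"

definition stint :: "real \<Rightarrow> real \<Rightarrow> real measure \<Rightarrow> (real \<Rightarrow> complex) \<Rightarrow>
    real measure \<Rightarrow> (real \<Rightarrow> complex) \<Rightarrow> real \<Rightarrow> complex" where
  "stint a b \<nu> h \<nu>' h' \<tau> =
     (LINT t:{\<tau><..}|\<nu>'. h' t *
        (LINT s:{0..<\<tau>}|\<nu>. h s * complex_of_real
           ((\<tau> - s) powr (a - 1) * (t - \<tau>) powr (b - 1) / (t - s) powr (a + b - 1))))"

definition sconv_density :: "real \<Rightarrow> real \<Rightarrow> real measure \<Rightarrow> (real \<Rightarrow> complex) \<Rightarrow>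
    real measure \<Rightarrow> (real \<Rightarrow> complex) \<Rightarrow> real \<Rightarrow> complex" where
  "sconv_density a1 a2 \<nu>1 h1 \<nu>2 h2 \<tau> =
     (stint a2 a1 \<nu>1 h1 \<nu>2 h2 \<tau> + stint a1 a2 \<nu>2 h2 \<nu>1 h1 \<tau>) / complex_of_real (Beta a1 a2)"

text \<open>(nu,h) represents mu1 (x)_{a1,a2} mu2 = u(tau) dtau + mu1({tau}) mu2(dtau) on bounded Borel subsets of R_+.\<close>
definition is_sconv :: "real \<Rightarrow> real \<Rightarrow> real measure \<Rightarrow> (real \<Rightarrow> complex) \<Rightarrow>
    real measure \<Rightarrow> (real \<Rightarrow> complex) \<Rightarrow> real measure \<Rightarrow> (real \<Rightarrow> complex) \<Rightarrow> bool" where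
  "is_sconv a1 a2 \<nu>1 h1 \<nu>2 h2 \<nu> h \<longleftrightarrow>
     cRadon \<nu> h \<and>
     (\<forall>A \<in> sets borel. bounded A \<longrightarrow> A \<subseteq> {0..} \<longrightarrow>
        set_integrable lborel A (sconv_density a1 a2 \<nu>1 h1 \<nu>2 h2) \<and>
        (LINT t:A|\<nu>. h t) =
          (LINT \<tau>:A|lborel. sconv_density a1 a2 \<nu>1 h1 \<nu>2 h2 \<tau>)
          + (LINT \<tau>:A|\<nu>2. ptmass \<nu>1 h1 \<tau> * h2 \<tau>))"

end

theory Submission
  imports Defs
begin

definition Cc :: "real \<Rightarrow> real \<Rightarrow> real" where
  "Cc a b = a powr a * b powr b / (a + b) powr (a + b)"

lemma Cc_commute: "Cc a b = Cc b a"
  by (simp add: Cc_def add.commute mult.commute)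

lemma Cc_pos: "a > 0 \<Longrightarrow> b > 0 \<Longrightarrow> Cc a b > 0"
  by (simp add: Cc_def)

lemma young_pow:
  fixes X Y a b :: real
  assumes "X \<ge> 0" "Y \<ge> 0" "a > 0" "b > 0"
  shows "X powr a * Y powr b \<le> Cc a b * (X + Y) powr (a + b)"
proof (cases "X = 0 \<or> Y = 0")
  case True
  then show ?thesis using assms Cc_pos[of a b] by auto
next
  case False
  then have X: "X > 0" and Y: "Y > 0" using assms by auto
  define al where "al = a / (a + b)"
  define be where "be = b / (a + b)"
  have ab: "a + b > 0" using assms by simp
  have al: "al > 0" "be > 0" "al + be = 1" using assms ab unfolding al_def be_def
    by (auto simp: add_divide_distrib[symmetric])
  have "(X / al) powr al * (Y / be) powr be \<le> al * (X / al) + be * (Y / be)"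
    by (rule Youngs_inequality_0) (use al X Y in auto)
  also have "\<dots> = X + Y" using al by simp
  finally have 1: "(X / al) powr al * (Y / be) powr be \<le> X + Y" .
  have "((X / al) powr al * (Y / be) powr be) powr (a + b) \<le> (X + Y) powr (a + b)"
    by (rule powr_mono2) (use 1 assms al X Y in auto)
  moreover have "((X / al) powr al * (Y / be) powr be) powr (a + b) = (X / al) powr a * (Y / be) powr b"
    using al X Y assms
    by (simp add: powr_mult powr_powr al_def be_def add_pos_pos[of a b, THEN less_imp_neq, symmetric])
  ultimately have 2: "(X / al) powr a * (Y / be) powr b \<le> (X + Y) powr (a + b)" by simp
  have "X powr a * Y powr b = ((X / al) powr a * (Y / be) powr b) * (al powr a * be powr b)"
    using al X Y by (simp add: powr_divide field_simps)
  also have "\<dots> \<le> (X + Y) powr (a + b) * (al powr a * be powr b)"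
    by (rule mult_right_mono[OF 2]) auto
  also have "al powr a * be powr b = Cc a b"
    using assms unfolding al_def be_def Cc_def
    by (simp add: powr_divide powr_add field_simps)
  finally show ?thesis by (simp add: mult.commute)
qed

lemma Beta_pos: "a > 0 \<Longrightarrow> b > 0 \<Longrightarrow> Beta a b > (0::real)"
  by (simp add: Beta_def Gamma_real_pos)

lemma beta_nn:
  assumes "a > 0" "b > 0"
  shows "(\<integral>\<^sup>+x. ennreal (x powr (a-1) * (1-x) powr (b-1) * indicator {0..1} x) \<partial>lborel) = ennreal (Beta a b)"
proof -
  have "(\<integral>\<^sup>+x. ennreal (indicator {0..1} x * (x powr (a-1) * (1-x) powr (b-1))) \<partial>lborel) = ennreal (Beta a b)"
    by (rule nn_integral_has_integral_lebesgue[OF _ has_integral_Beta_real[OF assms]]) auto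
  then show ?thesis by (simp add: mult.commute)
qed

lemma beta_affine:
  assumes st: "s < t" and ab: "a > 0" "b > 0"
  shows "(\<integral>\<^sup>+x. ennreal ((x-s) powr (a-1) * (t-x) powr (b-1) * indicator {s..t} x) \<partial>lborel)
     = ennreal (Beta a b * (t-s) powr (a+b-1))"
proof -
  define g where "g x = (x - s) / (t - s)" for x
  define f where "f y = y powr (a-1) * (1-y) powr (b-1)" for y
  have L: "t - s > 0" using st by simp
  have gs: "g s = 0" and gt: "g t = 1" using L by (auto simp: g_def)
  have sub: "(\<integral>\<^sup>+x. ennreal (f x * indicator {g s..g t} x) \<partial>lborel) =
     (\<integral>\<^sup>+x. ennreal (f (g x) * (1/(t-s)) * indicator {s..t} x) \<partial>lborel)"
  proof (rule nn_integral_substitution)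
    show "set_borel_measurable borel {g s..g t} f" unfolding f_def set_borel_measurable_def by measurable
    show "(g has_real_derivative 1/(t-s)) (at x)" for x
      unfolding g_def using L by (auto intro!: derivative_eq_intros)
  qed (use st in auto)
  have B: "ennreal (Beta a b) = (\<integral>\<^sup>+x. ennreal (f (g x) * (1/(t-s)) * indicator {s..t} x) \<partial>lborel)"
    using sub beta_nn[OF ab] unfolding gs gt f_def by simp
  have pt: "ennreal ((x-s) powr (a-1) * (t-x) powr (b-1) * indicator {s..t} x) =
      ennreal ((t-s) powr (a+b-1)) * ennreal (f (g x) * (1/(t-s)) * indicator {s..t} x)" for x
  proof (cases "x \<in> {s..t}")
    case True
    then have x: "x - s \<ge> 0" "t - x \<ge> 0" by auto
    have e: "1 - (x - s) / (t - s) = (t - x) / (t - s)" using L by (simp add: field_simps)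
    have "f (g x) * (1/(t-s)) = (x-s) powr (a-1) * (t-x) powr (b-1) / ((t-s) powr (a-1) * (t-s) powr (b-1) * (t-s))"
      unfolding f_def g_def e using x L by (simp add: powr_divide)
    also have "(t-s) powr (a-1) * (t-s) powr (b-1) * (t-s) = (t-s) powr (a+b-1)"
    proof -
      have "(t-s) powr (a-1) * (t-s) powr (b-1) * (t-s) powr 1 = (t-s) powr (a-1+(b-1)+1)"
        by (simp only: powr_add)
      moreover have "a-1+(b-1)+1 = a+b-1" by simp
      ultimately show ?thesis using L by (simp del: powr_one_gt_zero_iff)
    qed
    finally have "f (g x) * (1/(t-s)) = (x-s) powr (a-1) * (t-x) powr (b-1) / (t-s) powr (a+b-1)" .
    then show ?thesis using True L by (simp add: ennreal_mult[symmetric])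
  qed simp
  have "(\<integral>\<^sup>+x. ennreal ((x-s) powr (a-1) * (t-x) powr (b-1) * indicator {s..t} x) \<partial>lborel)
      = ennreal ((t-s) powr (a+b-1)) * (\<integral>\<^sup>+x. ennreal (f (g x) * (1/(t-s)) * indicator {s..t} x) \<partial>lborel)"
    unfolding pt by (rule nn_integral_cmult) (auto simp: f_def g_def)
  also have "\<dots> = ennreal (Beta a b * (t-s) powr (a+b-1))"
    unfolding B[symmetric] using Beta_pos[OF ab] by (simp add: ennreal_mult mult.commute)
  finally show ?thesis .
qed

lemma mobius_alg:
  fixes p q L R b1 b2 :: real
  assumes "p > 0" "q > 0" "L > 0" "R > 0"
  shows "L powr (b1+b2-1) * p powr (-b1) * q powr (-b2) * ((q powr (b2-1) / (L*R) powr (b2-1)) * (p powr (b1-1) / (L*R) powr (b1-1))) * (p*q/(L*R^2)) = R powr (-(b1+b2))"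
proof -
  have e: "p*q/(L*R^2) = exp(ln p + ln q - ln L - 2*ln R)"
  proof -
    have "exp (2 * ln R) = R^2" using assms ln_realpow[of R 2] by (metis exp_ln of_nat_numeral zero_less_power)
    then show ?thesis using assms by (simp add: exp_add exp_diff)
  qed
  show ?thesis unfolding e using assms
    apply (simp add: powr_def ln_mult mult_exp_exp)
    apply (simp add: exp_diff[symmetric] algebra_simps)
    done
qed

lemma beta_mobius:
  assumes st: "s < t" and s: "s > -1" and b: "b1 > 0" "b2 > 0"
  shows "(\<integral>\<^sup>+x. ennreal ((x-s) powr (b2-1) * (t-x) powr (b1-1) * (1+x) powr (-(b1+b2)) * indicator {s..t} x) \<partial>lborel)
     = ennreal (Beta b2 b1 * (t-s) powr (b1+b2-1) * (1+s) powr (-b1) * (1+t) powr (-b2))"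
proof -
  define p where "p = 1 + s"
  define q where "q = 1 + t"
  define L where "L = t - s"
  have pos: "p > 0" "q > 0" "L > 0" using st s by (auto simp: p_def q_def L_def)
  define g where "g x = (x - s) * q / (L * (1 + x))" for x
  define g' where "g' x = p * q / (L * (1 + x)^2)" for x
  define f where "f y = y powr (b2-1) * (1-y) powr (b1-1)" for y
  have gs: "g s = 0" and gt: "g t = 1" using pos by (auto simp: g_def L_def q_def)
  have sub: "(\<integral>\<^sup>+x. ennreal (f x * indicator {g s..g t} x) \<partial>lborel) =
     (\<integral>\<^sup>+x. ennreal (f (g x) * g' x * indicator {s..t} x) \<partial>lborel)"
  proof (rule nn_integral_substitution)
    show "set_borel_measurable borel {g s..g t} f" unfolding f_def set_borel_measurable_def by measurable
    show "(g has_real_derivative g' x) (at x)" if "x \<in> {s..t}" for x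
    proof -
      have x: "1 + x \<noteq> 0" using that s by auto
      have "((\<lambda>x. (x - s) * q / (L * (1 + x))) has_real_derivative
          ((1 * q) * (L * (1 + x)) - (x - s) * q * (L * (0 + 1))) / (L * (1 + x) * (L * (1 + x)))) (at x)"
        using x pos by (auto intro!: derivative_eq_intros)
      moreover have "((1 * q) * (L * (1 + x)) - (x - s) * q * (L * (0 + 1))) / (L * (1 + x) * (L * (1 + x))) = g' x"
      proof -
        have "((1 * q) * (L * (1 + x)) - (x - s) * q * (L * (0 + 1))) = L * (p * q)"
          by (simp add: p_def algebra_simps)
        moreover have "L * (p * q) / (L * (1 + x) * (L * (1 + x))) = p * q / (L * (1 + x)^2)"
          using pos x by (simp add: power2_eq_square)
        ultimately show ?thesis unfolding g'_def by simp
      qed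
      ultimately show ?thesis unfolding g_def by simp
    qed
    show "continuous_on {s..t} g'" unfolding g'_def using s pos
      by (auto intro!: continuous_intros)
    show "0 \<le> g' x" if "x \<in> {s..t}" for x using pos unfolding g'_def by auto
  qed (use st in auto)
  have B: "ennreal (Beta b2 b1) = (\<integral>\<^sup>+x. ennreal (f (g x) * g' x * indicator {s..t} x) \<partial>lborel)"
    using sub beta_nn[of b2 b1] b unfolding gs gt f_def by simp
  define c where "c = L powr (b1+b2-1) * p powr (-b1) * q powr (-b2)"
  have cpos: "c > 0" using pos unfolding c_def by simp
  have pt: "ennreal ((x-s) powr (b2-1) * (t-x) powr (b1-1) * (1+x) powr (-(b1+b2)) * indicator {s..t} x) =
      ennreal c * ennreal (f (g x) * g' x * indicator {s..t} x)" for x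
  proof (cases "x \<in> {s..t}")
    case True
    then have x: "x - s \<ge> 0" "t - x \<ge> 0" "1 + x > 0" using s by auto
    have e1: "g x = ((x - s) * q) / (L * (1 + x))" by (simp add: g_def)
    have nz: "L * (1 + x) \<noteq> 0" using x pos by simp
    have "1 - g x = (L * (1 + x) - (x - s) * q) / (L * (1 + x))"
      using nz by (simp add: g_def diff_divide_distrib)
    also have "L * (1 + x) - (x - s) * q = (t - x) * p"
      by (simp add: L_def p_def q_def algebra_simps)
    finally have e2: "1 - g x = ((t - x) * p) / (L * (1 + x))" .
    have "c * (f (g x) * g' x) = (x-s) powr (b2-1) * (t-x) powr (b1-1) *
       (L powr (b1+b2-1) * p powr (-b1) * q powr (-b2) * ((q powr (b2-1) / (L*(1+x)) powr (b2-1)) * (p powr (b1-1) / (L*(1+x)) powr (b1-1))) * (p*q/(L*(1+x)^2)))"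
      unfolding f_def unfolding e2 unfolding e1 c_def g'_def using x pos
      by (simp add: powr_divide powr_mult mult_ac)
    also have "\<dots> = (x-s) powr (b2-1) * (t-x) powr (b1-1) * (1+x) powr (-(b1+b2))"
      by (subst mobius_alg) (use pos x in auto)
    finally have eq: "c * (f (g x) * g' x) = (x-s) powr (b2-1) * (t-x) powr (b1-1) * (1+x) powr (-(b1+b2))" .
    have nn: "f (g x) * g' x \<ge> 0" unfolding f_def g'_def using pos by simp
    show ?thesis using True cpos nn eq[symmetric] by (simp add: ennreal_mult)
  qed simp
  have "(\<integral>\<^sup>+x. ennreal ((x-s) powr (b2-1) * (t-x) powr (b1-1) * (1+x) powr (-(b1+b2)) * indicator {s..t} x) \<partial>lborel)
      = ennreal c * (\<integral>\<^sup>+x. ennreal (f (g x) * g' x * indicator {s..t} x) \<partial>lborel)"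
    unfolding pt by (rule nn_integral_cmult) (auto simp: f_def g_def g'_def)
  also have "\<dots> = ennreal (Beta b2 b1 * (t-s) powr (b1+b2-1) * (1+s) powr (-b1) * (1+t) powr (-b2))"
    unfolding B[symmetric] using Beta_pos[of b2 b1] b cpos
    by (simp add: ennreal_mult[symmetric] c_def L_def p_def q_def mult_ac)
  finally show ?thesis .
qed

lemma kern_pt1:
  fixes X Y L R p q a b ba bb :: real
  assumes pos: "X > 0" "Y > 0" "p > 0" "q > 0" "R > 0" and LR: "Y * p + X * q = L * R"
    and b: "ba > 0" "bb > 0"
  shows "R powr (-(ba+bb)) * (X powr (a-1) * Y powr (b-1) / L powr (a+b-1))
      \<le> Cc bb ba * (p powr (-bb) * q powr (-ba) * (X powr (a-ba-1) * Y powr (b-bb-1) / L powr ((a-ba)+(b-bb)-1)))"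
proof -
  have L: "L > 0" using LR pos by (metis add_pos_pos mult_pos_pos zero_less_mult_pos2)
  define u where "u = (Y*p) powr bb * (X*q) powr ba"
  define v where "v = (L*R) powr (bb+ba)"
  define W where "W = p powr (-bb) * q powr (-ba) * (X powr (a-ba-1) * Y powr (b-bb-1) / L powr ((a-ba)+(b-bb)-1))"
  have uv: "u \<le> Cc bb ba * v" unfolding u_def v_def LR[symmetric]
    by (rule young_pow) (use pos b in auto)
  have vpos: "v > 0" unfolding v_def using L pos by simp
  have Wpos: "W \<ge> 0" unfolding W_def by simp
  have id: "R powr (-(ba+bb)) * (X powr (a-1) * Y powr (b-1) / L powr (a+b-1)) * v = W * u"
    unfolding u_def v_def W_def using pos L
    apply (simp add: powr_def ln_mult mult_exp_exp)
    apply (simp add: exp_diff[symmetric] mult_exp_exp algebra_simps)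
    done
  have "R powr (-(ba+bb)) * (X powr (a-1) * Y powr (b-1) / L powr (a+b-1)) * v \<le> (Cc bb ba * W) * v"
    unfolding id using mult_left_mono[OF uv Wpos] by (simp add: mult_ac)
  from mult_right_le_imp_le[OF this vpos] show ?thesis unfolding W_def .
qed

lemma kern_pt2:
  fixes X Y L R p q a b ba bb :: real
  assumes pos: "X > 0" "Y > 0" "R > 0" and XY: "X + Y = L"
    and g: "a - ba > 0" "b - bb > 0"
  shows "R powr (-(ba+bb)) * (X powr (a-1) * Y powr (b-1) / L powr (a+b-1))
      \<le> Cc (a-ba) (b-bb) * (L powr (1-ba-bb) * (X powr (ba-1) * Y powr (bb-1) * R powr (-(ba+bb))))"
proof -
  have L: "L > 0" using XY pos by auto
  define u where "u = X powr (a-ba) * Y powr (b-bb)"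
  define v where "v = L powr ((a-ba)+(b-bb))"
  define W where "W = L powr (1-ba-bb) * (X powr (ba-1) * Y powr (bb-1) * R powr (-(ba+bb)))"
  have uv: "u \<le> Cc (a-ba) (b-bb) * v" unfolding u_def v_def XY[symmetric]
    by (rule young_pow) (use pos g in auto)
  have vpos: "v > 0" unfolding v_def using L pos by simp
  have Wpos: "W \<ge> 0" unfolding W_def by simp
  have id: "R powr (-(ba+bb)) * (X powr (a-1) * Y powr (b-1) / L powr (a+b-1)) * v = W * u"
    unfolding u_def v_def W_def using pos L
    apply (simp add: powr_def ln_mult mult_exp_exp)
    apply (simp add: exp_diff[symmetric] mult_exp_exp algebra_simps)
    done
  have "R powr (-(ba+bb)) * (X powr (a-1) * Y powr (b-1) / L powr (a+b-1)) * v \<le> (Cc (a-ba) (b-bb) * W) * v"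
    unfolding id using mult_left_mono[OF uv Wpos] by (simp add: mult_ac)
  from mult_right_le_imp_le[OF this vpos] show ?thesis unfolding W_def .
qed

lemma min_ennreal_mult:
  fixes x y P :: real
  assumes "P > 0"
  shows "min (ennreal (x*P)) (ennreal (y*P)) = ennreal (min x y * P)"
proof (cases "x \<le> y")
  case True
  then have "ennreal (x*P) \<le> ennreal (y*P)" using assms by (intro ennreal_leI mult_right_mono) auto
  then show ?thesis using True by (simp add: min_absorb1)
next
  case False
  then have "ennreal (y*P) \<le> ennreal (x*P)" using assms by (intro ennreal_leI mult_right_mono) auto
  then show ?thesis using False by (simp add: min_absorb2)
qed

lemma kern_int:
  assumes s: "0 \<le> s" "s < t" and b: "0 < ba" "ba < a" "0 < bb" "bb < b"
  shows "(\<integral>\<^sup>+x. ennreal (indicator {s<..<t} x * ((1+x) powr (-(ba+bb)) * ((x-s) powr (a-1) * (t-x) powr (b-1) / (t-s) powr (a+b-1)))) \<partial>lborel)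
    \<le> ennreal (min (Cc bb ba * Beta (b-bb) (a-ba)) (Cc (b-bb) (a-ba) * Beta bb ba) * ((1+s) powr (-bb) * (1+t) powr (-ba)))"
    (is "?I \<le> _")
proof -
  define P where "P = (1+s) powr (-bb) * (1+t) powr (-ba)"
  define L where "L = t - s"
  have L: "L > 0" using s by (simp add: L_def)
  have Ppos: "P > 0" using s unfolding P_def by simp
  have I1: "?I \<le> ennreal (Cc bb ba * Beta (b-bb) (a-ba) * P)"
  proof -
    define c where "c = Cc bb ba * (P / L powr ((a-ba)+(b-bb)-1))"
    have cpos: "c \<ge> 0" unfolding c_def using Cc_pos[of bb ba] b Ppos by simp
    have "?I \<le> (\<integral>\<^sup>+x. ennreal c * ennreal ((x-s) powr ((a-ba)-1) * (t-x) powr ((b-bb)-1) * indicator {s..t} x) \<partial>lborel)"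
    proof (rule nn_integral_mono)
      fix x
      show "ennreal (indicator {s<..<t} x * ((1+x) powr (-(ba+bb)) * ((x-s) powr (a-1) * (t-x) powr (b-1) / (t-s) powr (a+b-1))))
        \<le> ennreal c * ennreal ((x-s) powr ((a-ba)-1) * (t-x) powr ((b-bb)-1) * indicator {s..t} x)"
      proof (cases "x \<in> {s<..<t}")
        case True
        have "(1+x) powr (-(ba+bb)) * ((x-s) powr (a-1) * (t-x) powr (b-1) / L powr (a+b-1))
          \<le> Cc bb ba * ((1+s) powr (-bb) * (1+t) powr (-ba) * ((x-s) powr (a-ba-1) * (t-x) powr (b-bb-1) / L powr ((a-ba)+(b-bb)-1)))"
          by (rule kern_pt1) (use True s b in \<open>auto simp: L_def algebra_simps\<close>)
        also have "\<dots> = c * ((x-s) powr ((a-ba)-1) * (t-x) powr ((b-bb)-1))"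
          unfolding c_def P_def using L by (simp add: mult_ac)
        finally show ?thesis using True cpos unfolding L_def
          by (simp add: ennreal_mult[symmetric])
      qed simp
    qed
    also have "\<dots> = ennreal c * ennreal (Beta (a-ba) (b-bb) * (t-s) powr ((a-ba)+(b-bb)-1))"
      by (subst nn_integral_cmult) (auto simp: beta_affine s b)
    also have "\<dots> = ennreal (Cc bb ba * Beta (b-bb) (a-ba) * P)"
      using cpos Beta_pos[of "a-ba" "b-bb"] b L
      by (simp add: ennreal_mult[symmetric] c_def L_def Beta_commute field_simps)
    finally show ?thesis .
  qed
  have I2: "?I \<le> ennreal (Cc (b-bb) (a-ba) * Beta bb ba * P)"
  proof -
    define c where "c = Cc (a-ba) (b-bb) * L powr (1-ba-bb)"
    have cpos: "c \<ge> 0" unfolding c_def using Cc_pos[of "a-ba" "b-bb"] b by simp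
    have "?I \<le> (\<integral>\<^sup>+x. ennreal c * ennreal ((x-s) powr (ba-1) * (t-x) powr (bb-1) * (1+x) powr (-(bb+ba)) * indicator {s..t} x) \<partial>lborel)"
    proof (rule nn_integral_mono)
      fix x
      show "ennreal (indicator {s<..<t} x * ((1+x) powr (-(ba+bb)) * ((x-s) powr (a-1) * (t-x) powr (b-1) / (t-s) powr (a+b-1))))
        \<le> ennreal c * ennreal ((x-s) powr (ba-1) * (t-x) powr (bb-1) * (1+x) powr (-(bb+ba)) * indicator {s..t} x)"
      proof (cases "x \<in> {s<..<t}")
        case True
        have "(1+x) powr (-(ba+bb)) * ((x-s) powr (a-1) * (t-x) powr (b-1) / L powr (a+b-1))
          \<le> Cc (a-ba) (b-bb) * (L powr (1-ba-bb) * ((x-s) powr (ba-1) * (t-x) powr (bb-1) * (1+x) powr (-(ba+bb))))"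
          by (rule kern_pt2) (use True s b in \<open>auto simp: L_def algebra_simps\<close>)
        also have "\<dots> = c * ((x-s) powr (ba-1) * (t-x) powr (bb-1) * (1+x) powr (-(bb+ba)))"
          unfolding c_def by (simp add: mult_ac add.commute)
        finally show ?thesis using True cpos unfolding L_def
          by (simp add: ennreal_mult[symmetric])
      qed simp
    qed
    also have "\<dots> = ennreal c * ennreal (Beta ba bb * (t-s) powr (bb+ba-1) * (1+s) powr (-bb) * (1+t) powr (-ba))"
      using beta_mobius[of s t bb ba] s b by (subst nn_integral_cmult) auto
    also have "\<dots> = ennreal (Cc (b-bb) (a-ba) * Beta bb ba * P)"
    proof -
      have "L powr (1-ba-bb) * L powr (bb+ba-1) = 1" using L by (simp add: powr_add[symmetric])
      then show ?thesis using cpos Beta_pos[of ba bb] b L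
        by (simp add: ennreal_mult[symmetric] c_def L_def P_def Beta_commute Cc_commute[of "a-ba"] field_simps)
    qed
    finally show ?thesis .
  qed
  have "?I \<le> min (ennreal (Cc bb ba * Beta (b-bb) (a-ba) * P)) (ennreal (Cc (b-bb) (a-ba) * Beta bb ba * P))"
    using I1 I2 by simp
  also have "\<dots> = ennreal (min (Cc bb ba * Beta (b-bb) (a-ba)) (Cc (b-bb) (a-ba) * Beta bb ba) * P)"
    using Ppos by (rule min_ennreal_mult)
  finally show ?thesis unfolding P_def .
qed

lemma beta_le:
  assumes "c > 0" "d > 0" "e > 0" "f > 0"
  shows "Beta (c+e) (d+f) \<le> Cc e f * Beta c d"
proof -
  have "ennreal (Beta (c+e) (d+f)) = (\<integral>\<^sup>+x. ennreal (x powr (c+e-1) * (1-x) powr (d+f-1) * indicator {0..1} x) \<partial>lborel)"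
    using beta_nn[of "c+e" "d+f"] assms by simp
  also have "\<dots> \<le> (\<integral>\<^sup>+x. ennreal (Cc e f) * ennreal (x powr (c-1) * (1-x) powr (d-1) * indicator {0..1} x) \<partial>lborel)"
  proof (rule nn_integral_mono)
    fix x :: real
    show "ennreal (x powr (c+e-1) * (1-x) powr (d+f-1) * indicator {0..1} x) \<le> ennreal (Cc e f) * ennreal (x powr (c-1) * (1-x) powr (d-1) * indicator {0..1} x)"
    proof (cases "x \<in> {0<..<1}")
      case True
      then have x: "x > 0" "1 - x > 0" by auto
      have yp: "x powr e * (1-x) powr f \<le> Cc e f * (x + (1 - x)) powr (e+f)"
        by (rule young_pow) (use x assms in auto)
      have "x powr (c+e-1) * (1-x) powr (d+f-1) = (x powr (c-1) * (1-x) powr (d-1)) * (x powr e * (1-x) powr f)"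
        using x by (simp add: powr_add[symmetric] algebra_simps)
      also have "\<dots> \<le> (x powr (c-1) * (1-x) powr (d-1)) * Cc e f"
        using mult_left_mono[OF yp, of "x powr (c-1) * (1-x) powr (d-1)"] by simp
      finally show ?thesis using True Cc_pos[of e f] assms
        by (simp add: ennreal_mult[symmetric] mult_ac)
    next
      case False
      then have "x \<notin> {0..1} \<or> x = 0 \<or> x = 1" by auto
      then show ?thesis by auto
    qed
  qed
  also have "\<dots> = ennreal (Cc e f) * ennreal (Beta c d)"
    using beta_nn[of c d] assms by (subst nn_integral_cmult) auto
  also have "\<dots> = ennreal (Cc e f * Beta c d)"
    using Cc_pos[of e f] Beta_pos[of c d] assms by (simp add: ennreal_mult)
  finally show ?thesis using Cc_pos[of e f] Beta_pos[of c d] assms by (simp add: ennreal_le_iff)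
qed


lemma cRadon_space: "cRadon \<nu> h \<Longrightarrow> space \<nu> = UNIV"
  unfolding cRadon_def by (metis sets_eq_imp_space_eq space_borel)

definition addm :: "real measure \<Rightarrow> real measure \<Rightarrow> real measure" where
  "addm M N = measure_of UNIV (sets borel) (\<lambda>A. emeasure M A + emeasure N A)"

lemma sets_addm[simp]: "sets (addm M N) = sets borel"
proof -
  have "sigma_algebra UNIV (sets (borel::real measure))" by (metis sets.sigma_algebra_axioms space_borel)
  then show ?thesis unfolding addm_def by (rule sigma_algebra.sets_measure_of_eq)
qed

lemma space_addm[simp]: "space (addm M N) = UNIV"
  using sets_addm sets_eq_imp_space_eq space_borel by metis

lemma cRadon_AE_nonneg:
  assumes "cRadon \<nu> h" shows "AE x in \<nu>. x \<ge> 0"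
proof -
  have "{x \<in> space \<nu>. \<not> x \<ge> 0} = {..<0}" using cRadon_space[OF assms] by auto
  moreover have "{..<0::real} \<in> sets \<nu>" using assms unfolding cRadon_def by auto
  ultimately show ?thesis using assms unfolding cRadon_def
    by (intro AE_I[of _ _ "{..<0}"]) (auto simp: cRadon_space[OF assms])
qed

lemma cRadon_sf:
  assumes "cRadon \<nu> h" shows "sigma_finite_measure \<nu>"
proof (unfold_locales)
  have sets: "sets \<nu> = sets borel" and neg: "emeasure \<nu> {..<0} = 0" and fin: "\<And>a. emeasure \<nu> {0..a} < \<infinity>"
    using assms unfolding cRadon_def by auto
  have sp: "space \<nu> = UNIV" using cRadon_space[OF assms] .
  let ?A = "range (\<lambda>n::nat. {- real n..real n})"
  have c: "countable ?A" by simp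
  have s: "?A \<subseteq> sets \<nu>" unfolding sets by auto
  have u: "\<Union> ?A = space \<nu>" unfolding sp
  proof (intro set_eqI iffI)
    fix x :: real
    obtain n :: nat where "\<bar>x\<bar> \<le> real n" using real_arch_simple by blast
    then have "x \<in> {- real n..real n}" by auto
    then show "x \<in> \<Union> ?A" by blast
  qed simp
  have f: "\<forall>a\<in>?A. emeasure \<nu> a \<noteq> \<infinity>"
  proof
    fix a assume "a \<in> ?A"
    then obtain n :: nat where a: "a = {- real n..real n}" by auto
    have "emeasure \<nu> a \<le> emeasure \<nu> ({..<0} \<union> {0..real n})"
      unfolding a by (rule emeasure_mono) (use sets in auto)
    also have "\<dots> \<le> emeasure \<nu> {..<0} + emeasure \<nu> {0..real n}"
      by (rule emeasure_subadditive) (use sets in auto)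
    also have "\<dots> < \<infinity>" using neg fin[of "real n"] by simp
    finally show "emeasure \<nu> a \<noteq> \<infinity>" by simp
  qed
  show "\<exists>A. countable A \<and> A \<subseteq> sets \<nu> \<and> \<Union> A = space \<nu> \<and> (\<forall>a\<in>A. emeasure \<nu> a \<noteq> \<infinity>)"
    using c s u f by blast
qed

lemma emeasure_addm:
  assumes M: "sets M = sets borel" and N: "sets N = sets borel" and A: "A \<in> sets borel"
  shows "emeasure (addm M N) A = emeasure M A + emeasure N A"
  unfolding addm_def
proof (rule emeasure_measure_of_sigma)
  show "sigma_algebra UNIV (sets borel)" by (metis sets.sigma_algebra_axioms space_borel)
  show "positive (sets borel) (\<lambda>A. emeasure M A + emeasure N A)" by (simp add: positive_def)
  show "countably_additive (sets borel) (\<lambda>A. emeasure M A + emeasure N A)"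
    unfolding countably_additive_def
  proof (intro allI impI)
    fix F :: "nat \<Rightarrow> real set"
    assume F: "range F \<subseteq> sets borel" "disjoint_family F" "\<Union> (range F) \<in> sets borel"
    have "(\<Sum>i. emeasure M (F i) + emeasure N (F i)) = (\<Sum>i. emeasure M (F i)) + (\<Sum>i. emeasure N (F i))"
      by (rule suminf_add[symmetric]) auto
    also have "\<dots> = emeasure M (\<Union>i. F i) + emeasure N (\<Union>i. F i)"
      using F by (simp add: suminf_emeasure M N)
    finally show "(\<Sum>i. emeasure M (F i) + emeasure N (F i)) = emeasure M (\<Union> (range F)) + emeasure N (\<Union> (range F))" .
  qed
qed (rule A)

lemma measurable_addm[simp]: "measurable (addm M N) K = measurable borel K"
  by (rule measurable_cong_sets) auto

lemma nn_integral_addm: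
  assumes M: "sets M = sets borel" and N: "sets N = sets borel" and f: "f \<in> borel_measurable borel"
  shows "(\<integral>\<^sup>+x. f x \<partial>addm M N) = (\<integral>\<^sup>+x. f x \<partial>M) + (\<integral>\<^sup>+x. f x \<partial>N)"
proof -
  note mM = measurable_cong_sets[OF M refl]
  note mN = measurable_cong_sets[OF N refl]
  have spM: "space M = UNIV" using M by (metis sets_eq_imp_space_eq space_borel)
  have spN: "space N = UNIV" using N by (metis sets_eq_imp_space_eq space_borel)
  have "f \<in> borel_measurable (addm M N)" using f by simp
  then show ?thesis
  proof (induct rule: borel_measurable_induct)
    case (cong f g)
    then have "\<And>x. f x = g x" by simp
    then have "f = g" by blast
    then show ?case using cong by simp
  next
    case (set A)
    then show ?case using M N by (simp add: emeasure_addm)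
  next
    case (mult u c)
    then have um: "u \<in> borel_measurable borel" by simp
    have "u \<in> borel_measurable M" "u \<in> borel_measurable N" using um mM mN by auto
    then show ?case using mult um
      by (simp add: nn_integral_cmult distrib_left)
  next
    case (add u v)
    then have "u \<in> borel_measurable borel" "v \<in> borel_measurable borel" by auto
    then have "u \<in> borel_measurable M" "u \<in> borel_measurable N" "v \<in> borel_measurable M" "v \<in> borel_measurable N"
      using mM mN by auto
    then show ?case using add
      by (simp add: nn_integral_add algebra_simps)
  next
    case (seq U)
    then have Um: "\<And>i. U i \<in> borel_measurable borel" by auto
    have mono: "incseq (\<lambda>i. \<integral>\<^sup>+x. U i x \<partial>K)" for K
      using seq(4) by (auto simp: incseq_def le_fun_def intro!: nn_integral_mono)
    have conv: "(\<integral>\<^sup>+x. (SUP i. U i x) \<partial>K) = (SUP i. \<integral>\<^sup>+x. U i x \<partial>K)" if "sets K = sets borel" for K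
    proof -
      have "U i \<in> borel_measurable K" for i using measurable_cong_sets[OF that refl] Um by metis
      then show ?thesis by (intro nn_integral_monotone_convergence_SUP seq(4)) auto
    qed
    have e: "Sup (range U) = (\<lambda>x. SUP i. U i x)" by (rule ext) (simp add: image_image)
    have "(\<integral>\<^sup>+x. (SUP i. U i x) \<partial>addm M N) = (SUP i. (\<integral>\<^sup>+x. U i x \<partial>M) + (\<integral>\<^sup>+x. U i x \<partial>N))"
      using conv[of "addm M N"] seq(3) by simp
    also have "\<dots> = (SUP i. \<integral>\<^sup>+x. U i x \<partial>M) + (SUP i. \<integral>\<^sup>+x. U i x \<partial>N)"
      by (rule ennreal_SUP_add) (rule mono)+
    also have "\<dots> = (\<integral>\<^sup>+x. (SUP i. U i x) \<partial>M) + (\<integral>\<^sup>+x. (SUP i. U i x) \<partial>N)"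
      using conv[OF M] conv[OF N] by simp
    finally show ?case unfolding e .
  qed
qed

lemma integrable_addm:
  fixes f :: "real \<Rightarrow> 'b::{banach, second_countable_topology}"
  assumes M: "sets M = sets borel" and N: "sets N = sets borel" and f: "integrable (addm M N) f"
  shows "integrable M f" "integrable N f"
proof -
  have fm: "f \<in> borel_measurable borel" using borel_measurable_integrable[OF f] by simp
  have "(\<integral>\<^sup>+x. norm (f x) \<partial>addm M N) < \<infinity>" using f unfolding integrable_iff_bounded by simp
  then have "(\<integral>\<^sup>+x. norm (f x) \<partial>M) + (\<integral>\<^sup>+x. norm (f x) \<partial>N) < \<infinity>"
    using nn_integral_addm[OF M N, of "\<lambda>x. ennreal (norm (f x))"] fm by simp
  moreover have "f \<in> borel_measurable M" "f \<in> borel_measurable N"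
    using fm measurable_cong_sets[OF M refl] measurable_cong_sets[OF N refl] by auto
  ultimately show "integrable M f" "integrable N f" unfolding integrable_iff_bounded by auto
qed

lemma integral_addm:
  fixes f :: "real \<Rightarrow> 'b::{banach, second_countable_topology}"
  assumes M: "sets M = sets borel" and N: "sets N = sets borel" and f: "integrable (addm M N) f"
  shows "integral\<^sup>L (addm M N) f = integral\<^sup>L M f + integral\<^sup>L N f"
  using f
proof induct
  case (base A c)
  then have A: "A \<in> sets borel" by simp
  have fin: "emeasure M A < \<infinity>" "emeasure N A < \<infinity>" using base emeasure_addm[OF M N A] by auto
  have "measure (addm M N) A = measure M A + measure N A"
    unfolding measure_def using emeasure_addm[OF M N A] fin by (simp add: enn2real_plus)
  then show ?case using base fin A M N by (simp add: scaleR_add_left)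
next
  case (add f g)
  have "integrable M f" "integrable M g" "integrable N f" "integrable N g"
    using integrable_addm[OF M N] add by auto
  then show ?case using add by (simp add: integral_add)
next
  case (lim f s)
  have iM: "integrable M f" "\<And>i. integrable M (s i)" and iN: "integrable N f" "\<And>i. integrable N (s i)"
    using integrable_addm[OF M N] lim by auto
  have spM: "space M = UNIV" using M by (metis sets_eq_imp_space_eq space_borel)
  have spN: "space N = UNIV" using N by (metis sets_eq_imp_space_eq space_borel)
  have lM: "(\<lambda>i. integral\<^sup>L M (s i)) \<longlonglongrightarrow> integral\<^sup>L M f"
    by (rule integral_dominated_convergence[where w="\<lambda>x. 2 * norm (f x)"])
       (use lim iM spM in \<open>auto intro!: borel_measurable_integrable\<close>)
  have lN: "(\<lambda>i. integral\<^sup>L N (s i)) \<longlonglongrightarrow> integral\<^sup>L N f"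
    by (rule integral_dominated_convergence[where w="\<lambda>x. 2 * norm (f x)"])
       (use lim iN spN in \<open>auto intro!: borel_measurable_integrable\<close>)
  have mA: "f \<in> borel_measurable (addm M N)" "\<And>i. s i \<in> borel_measurable (addm M N)"
    using lim(1,5) borel_measurable_integrable by blast+
  have lA: "(\<lambda>i. integral\<^sup>L (addm M N) (s i)) \<longlonglongrightarrow> integral\<^sup>L (addm M N) f"
    by (rule integral_dominated_convergence[where w="\<lambda>x. 2 * norm (f x)"])
       (use lim mA in \<open>auto simp del: measurable_addm\<close>)
  show ?case
  proof (rule LIMSEQ_unique[OF lA])
    show "(\<lambda>i. integral\<^sup>L (addm M N) (s i)) \<longlonglongrightarrow> integral\<^sup>L M f + integral\<^sup>L N f"
      unfolding lim(2) by (rule tendsto_add[OF lM lN])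
  qed
qed


definition K :: "real \<Rightarrow> real \<Rightarrow> real \<Rightarrow> real \<Rightarrow> real \<Rightarrow> real" where
  "K a b \<tau> s t = (\<tau> - s) powr (a - 1) * (t - \<tau>) powr (b - 1) / (t - s) powr (a + b - 1)"

lemma K_nonneg: "K a b \<tau> s t \<ge> 0" unfolding K_def by simp

lemma norm_integral_le_nn:
  fixes f :: "'a \<Rightarrow> 'b::{banach, second_countable_topology}"
  shows "ennreal (norm (integral\<^sup>L M f)) \<le> (\<integral>\<^sup>+x. ennreal (norm (f x)) \<partial>M)"
proof (cases "integrable M f")
  case True
  then show ?thesis by (rule integral_norm_bound_ennreal)
next
  case False
  then show ?thesis by (simp add: not_integrable_integral_eq)
qed

lemma stint_bound:
  assumes h: "\<And>t. cmod (h t) = 1" and h': "\<And>t. cmod (h' t) = 1"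
  shows "ennreal (cmod (stint a b \<nu> h \<nu>' h' \<tau>)) \<le>
    (\<integral>\<^sup>+t. indicator {\<tau><..} t * (\<integral>\<^sup>+s. indicator {0..<\<tau>} s * ennreal (K a b \<tau> s t) \<partial>\<nu>) \<partial>\<nu>')"
proof -
  have inner: "ennreal (cmod (LINT s:{0..<\<tau>}|\<nu>. h s * complex_of_real (K a b \<tau> s t))) \<le>
      (\<integral>\<^sup>+s. indicator {0..<\<tau>} s * ennreal (K a b \<tau> s t) \<partial>\<nu>)" for t
    unfolding set_lebesgue_integral_def
    by (rule order_trans[OF norm_integral_le_nn])
       (auto intro!: nn_integral_mono simp: h norm_mult K_nonneg split: split_indicator)
  show ?thesis
    unfolding stint_def set_lebesgue_integral_def K_def[symmetric]
    apply (rule order_trans[OF norm_integral_le_nn])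
    apply (rule nn_integral_mono)
    subgoal for t using inner[of t]
      by (auto simp: h' norm_mult set_lebesgue_integral_def split: split_indicator)
    done
qed


definition Fk :: "real \<Rightarrow> real \<Rightarrow> real \<Rightarrow> real \<Rightarrow> real \<Rightarrow> real \<Rightarrow> ennreal" where
  "Fk c a b \<tau> t s = (if \<tau> < t \<and> 0 \<le> s \<and> s < \<tau> then ennreal ((1+\<tau>) powr (-c) * K a b \<tau> s t) else 0)"

definition Gk :: "real \<Rightarrow> real \<Rightarrow> real \<Rightarrow> real \<Rightarrow> ennreal" where
  "Gk bb ba t s = (if s < t then ennreal ((1+s) powr (-bb) * (1+t) powr (-ba)) else 0)"

definition Mn :: "real \<Rightarrow> real \<Rightarrow> real \<Rightarrow> real \<Rightarrow> real" where
  "Mn a b ba bb = min (Cc bb ba * Beta (b-bb) (a-ba)) (Cc (b-bb) (a-ba) * Beta bb ba)"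

lemma Mn_pos:
  assumes b: "0 < ba" "ba < a" "0 < bb" "bb < b"
  shows "Mn a b ba bb > 0"
proof -
  have "Cc bb ba * Beta (b-bb) (a-ba) > 0" using Cc_pos[of bb ba] Beta_pos[of "b-bb" "a-ba"] b by simp
  moreover have "Cc (b-bb) (a-ba) * Beta bb ba > 0" using Cc_pos[of "b-bb" "a-ba"] Beta_pos[of bb ba] b by simp
  ultimately show ?thesis unfolding Mn_def by simp
qed

lemma Fk_int:
  assumes b: "0 < ba" "ba < a" "0 < bb" "bb < b"
  shows "(\<integral>\<^sup>+\<tau>. Fk (ba+bb) a b \<tau> t s \<partial>lborel) \<le> ennreal (Mn a b ba bb) * Gk bb ba t s"
proof (cases "0 \<le> s \<and> s < t")
  case True
  have "(\<integral>\<^sup>+\<tau>. Fk (ba+bb) a b \<tau> t s \<partial>lborel) =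
    (\<integral>\<^sup>+x. ennreal (indicator {s<..<t} x * ((1+x) powr (-(ba+bb)) * ((x-s) powr (a-1) * (t-x) powr (b-1) / (t-s) powr (a+b-1)))) \<partial>lborel)"
    using True by (intro nn_integral_cong) (auto simp: Fk_def K_def split: split_indicator)
  also have "\<dots> \<le> ennreal (Mn a b ba bb * ((1+s) powr (-bb) * (1+t) powr (-ba)))"
    unfolding Mn_def by (rule kern_int) (use True b in auto)
  also have "\<dots> = ennreal (Mn a b ba bb) * Gk bb ba t s"
  proof -
    have "Mn a b ba bb \<ge> 0" using Mn_pos[OF b] by simp
    then show ?thesis using True by (simp add: Gk_def ennreal_mult)
  qed
  finally show ?thesis .
next
  case False
  then have "\<And>\<tau>. Fk (ba+bb) a b \<tau> t s = 0" by (auto simp: Fk_def)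
  then show ?thesis by simp
qed

lemma tonelli1:
  fixes \<nu> \<nu>' :: "real measure"
  assumes sf: "sigma_finite_measure \<nu>" "sigma_finite_measure \<nu>'"
    and s1[measurable_cong]: "sets \<nu> = sets borel" and s2[measurable_cong]: "sets \<nu>' = sets borel"
    and b: "0 < ba" "ba < a" "0 < bb" "bb < b"
  shows "(\<integral>\<^sup>+\<tau>. \<integral>\<^sup>+t. \<integral>\<^sup>+s. Fk (ba+bb) a b \<tau> t s \<partial>\<nu> \<partial>\<nu>' \<partial>lborel)
     \<le> (\<integral>\<^sup>+t. \<integral>\<^sup>+s. ennreal (Mn a b ba bb) * Gk bb ba t s \<partial>\<nu> \<partial>\<nu>')"
proof -
  interpret p1: pair_sigma_finite \<nu>' lborel
    by (intro pair_sigma_finite.intro sf lborel.sigma_finite_measure_axioms)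
  interpret p2: pair_sigma_finite \<nu> lborel
    by (intro pair_sigma_finite.intro sf lborel.sigma_finite_measure_axioms)
  have m1: "(\<lambda>x. \<integral>\<^sup>+s. Fk (ba+bb) a b (snd x) (fst x) s \<partial>\<nu>) \<in> borel_measurable (\<nu>' \<Otimes>\<^sub>M lborel)"
    by (rule sigma_finite_measure.borel_measurable_nn_integral[OF sf(1), where f="\<lambda>x s. Fk (ba+bb) a b (snd x) (fst x) s"])
       (unfold Fk_def K_def, measurable)
  have "(\<integral>\<^sup>+\<tau>. \<integral>\<^sup>+t. \<integral>\<^sup>+s. Fk (ba+bb) a b \<tau> t s \<partial>\<nu> \<partial>\<nu>' \<partial>lborel)
      = (\<integral>\<^sup>+t. \<integral>\<^sup>+\<tau>. \<integral>\<^sup>+s. Fk (ba+bb) a b \<tau> t s \<partial>\<nu> \<partial>lborel \<partial>\<nu>')"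
    using p1.Fubini'[where f="\<lambda>t \<tau>. \<integral>\<^sup>+s. Fk (ba+bb) a b \<tau> t s \<partial>\<nu>"] m1 by (simp add: case_prod_beta')
  also have "\<dots> = (\<integral>\<^sup>+t. \<integral>\<^sup>+s. \<integral>\<^sup>+\<tau>. Fk (ba+bb) a b \<tau> t s \<partial>lborel \<partial>\<nu> \<partial>\<nu>')"
  proof (rule nn_integral_cong)
    fix t
    show "(\<integral>\<^sup>+\<tau>. \<integral>\<^sup>+s. Fk (ba+bb) a b \<tau> t s \<partial>\<nu> \<partial>lborel) = (\<integral>\<^sup>+s. \<integral>\<^sup>+\<tau>. Fk (ba+bb) a b \<tau> t s \<partial>lborel \<partial>\<nu>)"
      by (rule p2.Fubini'[where f="\<lambda>s \<tau>. Fk (ba+bb) a b \<tau> t s"]) (unfold Fk_def K_def, measurable)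
  qed
  also have "\<dots> \<le> (\<integral>\<^sup>+t. \<integral>\<^sup>+s. ennreal (Mn a b ba bb) * Gk bb ba t s \<partial>\<nu> \<partial>\<nu>')"
    by (intro nn_integral_mono Fk_int b)
  finally show ?thesis .
qed


lemma stint_alt:
  "stint a b \<nu> h \<nu>' h' \<tau> = (\<integral>t. (if \<tau> < t then h' t * (\<integral>s. (if 0 \<le> s \<and> s < \<tau> then h s * complex_of_real (K a b \<tau> s t) else 0) \<partial>\<nu>) else 0) \<partial>\<nu>')"
  unfolding stint_def set_lebesgue_integral_def K_def[symmetric]
proof (intro Bochner_Integration.integral_cong refl)
  fix t
  have "(\<integral>s. indicator {0..<\<tau>} s *\<^sub>R (h s * complex_of_real (K a b \<tau> s t)) \<partial>\<nu>) =
        (\<integral>s. (if 0 \<le> s \<and> s < \<tau> then h s * complex_of_real (K a b \<tau> s t) else 0) \<partial>\<nu>)"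
    by (intro Bochner_Integration.integral_cong refl) (auto split: split_indicator)
  then show "indicator {\<tau><..} t *\<^sub>R (h' t * (\<integral>s. indicator {0..<\<tau>} s *\<^sub>R (h s * complex_of_real (K a b \<tau> s t)) \<partial>\<nu>)) =
    (if \<tau> < t then h' t * (\<integral>s. (if 0 \<le> s \<and> s < \<tau> then h s * complex_of_real (K a b \<tau> s t) else 0) \<partial>\<nu>) else 0)"
    by (auto split: split_indicator)
qed

lemma stint_meas:
  fixes \<nu> \<nu>' :: "real measure"
  assumes sf: "sigma_finite_measure \<nu>" "sigma_finite_measure \<nu>'"
    and s1[measurable_cong]: "sets \<nu> = sets borel" and s2[measurable_cong]: "sets \<nu>' = sets borel"
    and hm[measurable]: "h \<in> borel_measurable borel" "h' \<in> borel_measurable borel"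
  shows "stint a b \<nu> h \<nu>' h' \<in> borel_measurable borel"
proof -
  interpret n1: sigma_finite_measure \<nu> by (rule sf)
  interpret n2: sigma_finite_measure \<nu>' by (rule sf)
  show ?thesis unfolding stint_alt[abs_def] K_def by measurable
qed

lemma stint_nonpos:
  assumes "\<tau> \<le> 0" shows "stint a b \<nu> h \<nu>' h' \<tau> = 0"
proof -
  have "\<And>t. (\<integral>s. (if 0 \<le> s \<and> s < \<tau> then h s * complex_of_real (K a b \<tau> s t) else 0) \<partial>\<nu>) = 0"
    using assms by (simp add: Bochner_Integration.integral_cong[of _ _ _ "\<lambda>_. 0"])
  then show ?thesis unfolding stint_alt by (simp only: mult_zero_right if_cancel) simp
qed

lemma stint_Fk:
  fixes \<nu> \<nu>' :: "real measure"
  assumes sf: "sigma_finite_measure \<nu>" "sigma_finite_measure \<nu>'"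
    and s1[measurable_cong]: "sets \<nu> = sets borel" and s2[measurable_cong]: "sets \<nu>' = sets borel"
    and h: "\<And>t. cmod (h t) = 1" and h': "\<And>t. cmod (h' t) = 1"
  shows "ennreal ((1+\<tau>) powr (-c)) * ennreal (cmod (stint a b \<nu> h \<nu>' h' \<tau>)) \<le> (\<integral>\<^sup>+t. \<integral>\<^sup>+s. Fk c a b \<tau> t s \<partial>\<nu> \<partial>\<nu>')"
proof -
  interpret n1: sigma_finite_measure \<nu> by (rule sf)
  interpret n2: sigma_finite_measure \<nu>' by (rule sf)
  have "ennreal ((1+\<tau>) powr (-c)) * ennreal (cmod (stint a b \<nu> h \<nu>' h' \<tau>)) \<le>
     ennreal ((1+\<tau>) powr (-c)) * (\<integral>\<^sup>+t. indicator {\<tau><..} t * (\<integral>\<^sup>+s. indicator {0..<\<tau>} s * ennreal (K a b \<tau> s t) \<partial>\<nu>) \<partial>\<nu>')"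
    by (rule mult_left_mono[OF stint_bound[OF h h']]) simp
  also have "\<dots> = (\<integral>\<^sup>+t. ennreal ((1+\<tau>) powr (-c)) * (indicator {\<tau><..} t * (\<integral>\<^sup>+s. indicator {0..<\<tau>} s * ennreal (K a b \<tau> s t) \<partial>\<nu>)) \<partial>\<nu>')"
    by (rule nn_integral_cmult[symmetric]) (unfold K_def, measurable)
  also have "\<dots> = (\<integral>\<^sup>+t. \<integral>\<^sup>+s. Fk c a b \<tau> t s \<partial>\<nu> \<partial>\<nu>')"
  proof (rule nn_integral_cong)
    fix t
    have "ennreal ((1+\<tau>) powr (-c)) * (indicator {\<tau><..} t * (\<integral>\<^sup>+s. indicator {0..<\<tau>} s * ennreal (K a b \<tau> s t) \<partial>\<nu>))
       = (\<integral>\<^sup>+s. ennreal ((1+\<tau>) powr (-c)) * (indicator {\<tau><..} t * (indicator {0..<\<tau>} s * ennreal (K a b \<tau> s t))) \<partial>\<nu>)"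
    proof -
      have "indicator {\<tau><..} t * (\<integral>\<^sup>+s. indicator {0..<\<tau>} s * ennreal (K a b \<tau> s t) \<partial>\<nu>) =
         (\<integral>\<^sup>+s. indicator {\<tau><..} t * (indicator {0..<\<tau>} s * ennreal (K a b \<tau> s t)) \<partial>\<nu>)"
        by (rule nn_integral_cmult[symmetric]) (unfold K_def, measurable)
      then show ?thesis
        by (simp only:) (rule nn_integral_cmult[symmetric], unfold K_def, measurable)
    qed
    also have "\<dots> = (\<integral>\<^sup>+s. Fk c a b \<tau> t s \<partial>\<nu>)"
      by (intro nn_integral_cong) (simp add: Fk_def ennreal_mult' split: split_indicator)
    finally show "ennreal ((1+\<tau>) powr (-c)) * (indicator {\<tau><..} t * (\<integral>\<^sup>+s. indicator {0..<\<tau>} s * ennreal (K a b \<tau> s t) \<partial>\<nu>))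
       = (\<integral>\<^sup>+s. Fk c a b \<tau> t s \<partial>\<nu>)" .
  qed
  finally show ?thesis .
qed


lemma cRadon_fin:
  assumes "cRadon \<nu> h" shows "emeasure \<nu> {- real n..real n} < \<infinity>"
proof -
  have sets: "sets \<nu> = sets borel" and neg: "emeasure \<nu> {..<0} = 0" and fin: "\<And>a. emeasure \<nu> {0..a} < \<infinity>"
    using assms unfolding cRadon_def by auto
  have "emeasure \<nu> {- real n..real n} \<le> emeasure \<nu> ({..<0} \<union> {0..real n})"
    by (rule emeasure_mono) (use sets in auto)
  also have "\<dots> \<le> emeasure \<nu> {..<0} + emeasure \<nu> {0..real n}"
    by (rule emeasure_subadditive) (use sets in auto)
  also have "\<dots> < \<infinity>" using neg fin[of "real n"] by simp
  finally show ?thesis .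
qed

lemma countable_atoms:
  assumes R: "cRadon \<nu> h" shows "countable {x. measure \<nu> {x} \<noteq> 0}"
proof -
  have sets: "sets \<nu> = sets borel" using R unfolding cRadon_def by auto
  have sp: "space \<nu> = UNIV" using cRadon_space[OF R] .
  define M where "M n = density \<nu> (indicator {- real n..real n})" for n :: nat
  have em: "emeasure (M n) A = emeasure \<nu> (A \<inter> {- real n..real n})" if "A \<in> sets borel" for n A
  proof -
    have A: "A \<in> sets \<nu>" using that sets by simp
    have "emeasure (M n) A = (\<integral>\<^sup>+x. indicator {- real n..real n} x * indicator A x \<partial>\<nu>)"
      unfolding M_def by (rule emeasure_density) (use A sets in auto)
    also have "\<dots> = (\<integral>\<^sup>+x. indicator (A \<inter> {- real n..real n}) x \<partial>\<nu>)"
      by (intro nn_integral_cong) (simp split: split_indicator)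
    also have "\<dots> = emeasure \<nu> (A \<inter> {- real n..real n})"
      by (rule nn_integral_indicator) (use A sets in auto)
    finally show ?thesis .
  qed
  have fm: "finite_measure (M n)" for n
  proof (rule finite_measureI)
    have "space (M n) = UNIV" unfolding M_def by (simp add: sp)
    then show "emeasure (M n) (space (M n)) \<noteq> \<infinity>" using em[of UNIV n] cRadon_fin[OF R, of n] by simp
  qed
  have "{x. measure \<nu> {x} \<noteq> 0} \<subseteq> (\<Union>n. {x. measure (M n) {x} \<noteq> 0})"
  proof
    fix x assume x: "x \<in> {x. measure \<nu> {x} \<noteq> 0}"
    obtain n :: nat where "\<bar>x\<bar> \<le> real n" using real_arch_simple by blast
    then have "{x} \<inter> {- real n..real n} = {x}" by auto
    then have "measure (M n) {x} = measure \<nu> {x}" using em[of "{x}" n] unfolding measure_def by simp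
    then show "x \<in> (\<Union>n. {x. measure (M n) {x} \<noteq> 0})" using x by (intro UN_I[of n]) auto
  qed
  moreover have "countable (\<Union>n. {x. measure (M n) {x} \<noteq> 0})"
    by (intro countable_UN) (simp_all add: finite_measure.countable_support[OF fm])
  ultimately show ?thesis by (rule countable_subset)
qed

lemma weight_ge:
  fixes t R c :: real
  assumes "0 \<le> t" "t \<le> R" "c \<ge> 0"
  shows "1 \<le> (1+R) powr c * (1+t) powr (-c)"
proof -
  have "(1+t) powr c \<le> (1+R) powr c" by (rule powr_mono2) (use assms in auto)
  then have "(1+t) powr c * (1+t) powr (-c) \<le> (1+R) powr c * (1+t) powr (-c)"
    by (rule mult_right_mono) simp
  moreover have "(1+t) powr c * (1+t) powr (-c) = 1" using assms by (simp add: powr_add[symmetric])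
  ultimately show ?thesis by simp
qed

lemma nn_weight_bound:
  fixes f :: "real \<Rightarrow> ennreal"
  assumes "c \<ge> 0" "f \<in> borel_measurable borel" and [measurable_cong]: "sets M = sets borel"
  shows "(\<integral>\<^sup>+t. indicator {0..R} t * f t \<partial>M) \<le> ennreal ((1+R) powr c) * (\<integral>\<^sup>+t. ennreal ((1+t) powr (-c)) * f t \<partial>M)"
proof -
  have "(\<integral>\<^sup>+t. indicator {0..R} t * f t \<partial>M) \<le> (\<integral>\<^sup>+t. ennreal ((1+R) powr c) * (ennreal ((1+t) powr (-c)) * f t) \<partial>M)"
  proof (rule nn_integral_mono)
    fix t
    show "indicator {0..R} t * f t \<le> ennreal ((1+R) powr c) * (ennreal ((1+t) powr (-c)) * f t)"
    proof (cases "t \<in> {0..R}")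
      case True
      then have "1 \<le> (1+R) powr c * (1+t) powr (-c)" using weight_ge assms by auto
      then have "ennreal 1 \<le> ennreal ((1+R) powr c * (1+t) powr (-c))" by (rule ennreal_leI)
      then have "1 * f t \<le> ennreal ((1+R) powr c * (1+t) powr (-c)) * f t" by (intro mult_right_mono) auto
      then show ?thesis using True by (simp add: ennreal_mult mult.assoc)
    qed simp
  qed
  also have "\<dots> = ennreal ((1+R) powr c) * (\<integral>\<^sup>+t. ennreal ((1+t) powr (-c)) * f t \<partial>M)"
    using assms(2) by (intro nn_integral_cmult) measurable
  finally show ?thesis .
qed


lemma nn_add2:
  fixes \<nu>1 \<nu>2 :: "real measure" and A B :: "real \<Rightarrow> real \<Rightarrow> ennreal"
  assumes sf: "sigma_finite_measure \<nu>1"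
    and s1[measurable_cong]: "sets \<nu>1 = sets borel" and s2[measurable_cong]: "sets \<nu>2 = sets borel"
    and Am[measurable]: "case_prod A \<in> borel_measurable (borel \<Otimes>\<^sub>M borel)"
    and Bm[measurable]: "case_prod B \<in> borel_measurable (borel \<Otimes>\<^sub>M borel)"
  shows "(\<integral>\<^sup>+t. \<integral>\<^sup>+s. A t s \<partial>\<nu>1 \<partial>\<nu>2) + (\<integral>\<^sup>+t. \<integral>\<^sup>+s. B t s \<partial>\<nu>1 \<partial>\<nu>2) = (\<integral>\<^sup>+t. \<integral>\<^sup>+s. A t s + B t s \<partial>\<nu>1 \<partial>\<nu>2)"
proof -
  interpret n1: sigma_finite_measure \<nu>1 by (rule sf)
  have "(\<integral>\<^sup>+t. \<integral>\<^sup>+s. A t s \<partial>\<nu>1 \<partial>\<nu>2) + (\<integral>\<^sup>+t. \<integral>\<^sup>+s. B t s \<partial>\<nu>1 \<partial>\<nu>2) = (\<integral>\<^sup>+t. (\<integral>\<^sup>+s. A t s \<partial>\<nu>1) + (\<integral>\<^sup>+s. B t s \<partial>\<nu>1) \<partial>\<nu>2)"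
    by (rule nn_integral_add[symmetric]) measurable
  also have "\<dots> = (\<integral>\<^sup>+t. \<integral>\<^sup>+s. A t s + B t s \<partial>\<nu>1 \<partial>\<nu>2)"
    by (intro nn_integral_cong nn_integral_add[symmetric]) measurable
  finally show ?thesis .
qed

lemma nn_cmult2:
  fixes \<nu>1 \<nu>2 :: "real measure" and A :: "real \<Rightarrow> real \<Rightarrow> ennreal"
  assumes sf: "sigma_finite_measure \<nu>1"
    and s1[measurable_cong]: "sets \<nu>1 = sets borel" and s2[measurable_cong]: "sets \<nu>2 = sets borel"
    and Am[measurable]: "case_prod A \<in> borel_measurable (borel \<Otimes>\<^sub>M borel)"
  shows "(\<integral>\<^sup>+t. \<integral>\<^sup>+s. c * A t s \<partial>\<nu>1 \<partial>\<nu>2) = c * (\<integral>\<^sup>+t. \<integral>\<^sup>+s. A t s \<partial>\<nu>1 \<partial>\<nu>2)"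
proof -
  interpret n1: sigma_finite_measure \<nu>1 by (rule sf)
  have "(\<integral>\<^sup>+t. \<integral>\<^sup>+s. c * A t s \<partial>\<nu>1 \<partial>\<nu>2) = (\<integral>\<^sup>+t. c * \<integral>\<^sup>+s. A t s \<partial>\<nu>1 \<partial>\<nu>2)"
    by (intro nn_integral_cong nn_integral_cmult) measurable
  also have "\<dots> = c * (\<integral>\<^sup>+t. \<integral>\<^sup>+s. A t s \<partial>\<nu>1 \<partial>\<nu>2)"
    by (rule nn_integral_cmult) measurable
  finally show ?thesis .
qed

lemma nn_swap:
  fixes \<nu>1 \<nu>2 :: "real measure" and A :: "real \<Rightarrow> real \<Rightarrow> ennreal"
  assumes sf: "sigma_finite_measure \<nu>1" "sigma_finite_measure \<nu>2"
    and s1[measurable_cong]: "sets \<nu>1 = sets borel" and s2[measurable_cong]: "sets \<nu>2 = sets borel"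
    and Am[measurable]: "case_prod A \<in> borel_measurable (borel \<Otimes>\<^sub>M borel)"
  shows "(\<integral>\<^sup>+t. \<integral>\<^sup>+s. A t s \<partial>\<nu>2 \<partial>\<nu>1) = (\<integral>\<^sup>+t. \<integral>\<^sup>+s. A s t \<partial>\<nu>1 \<partial>\<nu>2)"
proof -
  interpret p: pair_sigma_finite \<nu>2 \<nu>1 by (intro pair_sigma_finite.intro sf)
  show ?thesis by (rule p.Fubini'[where f="\<lambda>s t. A t s"]) measurable
qed


theorem theorem4p3:
  fixes \<alpha>1 \<alpha>2 \<beta>1 \<beta>2 :: real
    and \<nu>1 \<nu>2 :: "real measure" and h1 h2 :: "real \<Rightarrow> complex"
  defines "\<gamma>1 \<equiv> \<alpha>1 - \<beta>1" and "\<gamma>2 \<equiv> \<alpha>2 - \<beta>2"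
  assumes "\<alpha>1 > 0" "\<alpha>2 > 0"
    and "0 < \<beta>1" "\<beta>1 < \<alpha>1" "0 < \<beta>2" "\<beta>2 < \<alpha>2"
    and "cRadon \<nu>1 h1" "wnorm \<beta>1 \<nu>1 < \<infinity>"
    and "cRadon \<nu>2 h2" "wnorm \<beta>2 \<nu>2 < \<infinity>"
  shows "\<exists>\<nu> h. is_sconv \<alpha>1 \<alpha>2 \<nu>1 h1 \<nu>2 h2 \<nu> h \<and>
           wnorm (\<beta>1 + \<beta>2) \<nu> < \<infinity> \<and>
           wnorm (\<beta>1 + \<beta>2) \<nu> \<le>
             ennreal (min
               (\<beta>1 powr \<beta>1 * \<beta>2 powr \<beta>2 / (\<beta>1 + \<beta>2) powr (\<beta>1 + \<beta>2)
                  * Beta \<gamma>1 \<gamma>2 / Beta \<alpha>1 \<alpha>2)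
               (\<gamma>1 powr \<gamma>1 * \<gamma>2 powr \<gamma>2 / (\<gamma>1 + \<gamma>2) powr (\<gamma>1 + \<gamma>2)
                  * Beta \<beta>1 \<beta>2 / Beta \<alpha>1 \<alpha>2))
             * wnorm \<beta>1 \<nu>1 * wnorm \<beta>2 \<nu>2"
proof -
  have b: "0 < \<beta>1" "\<beta>1 < \<alpha>1" "0 < \<beta>2" "\<beta>2 < \<alpha>2" using assms by auto
  have g: "\<gamma>1 > 0" "\<gamma>2 > 0" using b unfolding \<gamma>1_def \<gamma>2_def by auto
  have R1: "cRadon \<nu>1 h1" and R2: "cRadon \<nu>2 h2" using assms by auto
  have W1fin: "wnorm \<beta>1 \<nu>1 < \<infinity>" and W2fin: "wnorm \<beta>2 \<nu>2 < \<infinity>" using assms by auto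
  have s1[measurable_cong]: "sets \<nu>1 = sets borel" and s2[measurable_cong]: "sets \<nu>2 = sets borel"
    using R1 R2 unfolding cRadon_def by auto
  have sf1: "sigma_finite_measure \<nu>1" and sf2: "sigma_finite_measure \<nu>2" using cRadon_sf R1 R2 by auto
  interpret n1: sigma_finite_measure \<nu>1 by (rule sf1)
  interpret n2: sigma_finite_measure \<nu>2 by (rule sf2)
  have hm[measurable]: "h1 \<in> borel_measurable borel" "h2 \<in> borel_measurable borel"
    using R1 R2 unfolding cRadon_def by auto
  have hn: "\<And>t. cmod (h1 t) = 1" "\<And>t. cmod (h2 t) = 1" using R1 R2 unfolding cRadon_def by auto
  have sp1: "space \<nu>1 = UNIV" and sp2: "space \<nu>2 = UNIV" using cRadon_space R1 R2 by auto
  define B where "B = Beta \<alpha>1 \<alpha>2"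
  have Bpos: "B > 0" unfolding B_def using Beta_pos assms by auto
  define u where "u = sconv_density \<alpha>1 \<alpha>2 \<nu>1 h1 \<nu>2 h2"
  have st1[measurable]: "stint \<alpha>2 \<alpha>1 \<nu>1 h1 \<nu>2 h2 \<in> borel_measurable borel"
    by (rule stint_meas[OF sf1 sf2 s1 s2 hm])
  have st2[measurable]: "stint \<alpha>1 \<alpha>2 \<nu>2 h2 \<nu>1 h1 \<in> borel_measurable borel"
    by (rule stint_meas[OF sf2 sf1 s2 s1 hm(2,1)])
  have um[measurable]: "u \<in> borel_measurable borel"
    unfolding u_def sconv_density_def[abs_def] by measurable
  define E where "E = {x. measure \<nu>1 {x} \<noteq> 0}"
  have Ec: "countable E" unfolding E_def by (rule countable_atoms[OF R1])
  have Em[measurable]: "E \<in> sets borel" by (rule sets.countable[OF _ Ec]) simp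
  have atm[measurable]: "(\<lambda>\<tau>. measure \<nu>1 {\<tau>}) \<in> borel_measurable borel"
  proof (rule measurable_discrete_difference[where f="\<lambda>_. 0" and X=E])
    show "countable E" by (rule Ec)
  qed (auto simp: E_def)
  define hh where "hh \<tau> = (if \<tau> \<in> E then h1 \<tau> * h2 \<tau> else if u \<tau> = 0 then 1 else u \<tau> / complex_of_real (cmod (u \<tau>)))" for \<tau>
  have hhm[measurable]: "hh \<in> borel_measurable borel" unfolding hh_def[abs_def] by measurable
  have hhn: "cmod (hh \<tau>) = 1" for \<tau>
    unfolding hh_def using hn by (auto simp: norm_mult norm_divide)
  define \<mu>a where "\<mu>a = density lborel (\<lambda>\<tau>. ennreal (cmod (u \<tau>)))"
  define \<mu>b where "\<mu>b = density \<nu>2 (\<lambda>\<tau>. ennreal (measure \<nu>1 {\<tau>}))"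
  have sa: "sets \<mu>a = sets borel" and sb: "sets \<mu>b = sets borel" unfolding \<mu>a_def \<mu>b_def by (auto simp: s2)
  define \<nu> where "\<nu> = addm \<mu>a \<mu>b"
  define M where "M = min (Cc \<beta>1 \<beta>2 * Beta \<gamma>1 \<gamma>2) (Cc \<gamma>1 \<gamma>2 * Beta \<beta>1 \<beta>2)"
  have MB: "B \<le> M"
  proof -
    have "Beta (\<gamma>1+\<beta>1) (\<gamma>2+\<beta>2) \<le> Cc \<beta>1 \<beta>2 * Beta \<gamma>1 \<gamma>2" by (rule beta_le) (use b g in auto)
    moreover have "Beta (\<beta>1+\<gamma>1) (\<beta>2+\<gamma>2) \<le> Cc \<gamma>1 \<gamma>2 * Beta \<beta>1 \<beta>2" by (rule beta_le) (use b g in auto)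
    ultimately show ?thesis unfolding M_def B_def \<gamma>1_def \<gamma>2_def by (simp add: add.commute)
  qed
  have Mn1: "Mn \<alpha>2 \<alpha>1 \<beta>2 \<beta>1 = M" unfolding Mn_def M_def \<gamma>1_def \<gamma>2_def ..
  have Mn2: "Mn \<alpha>1 \<alpha>2 \<beta>1 \<beta>2 = M" unfolding Mn_def M_def \<gamma>1_def \<gamma>2_def
    by (simp add: Cc_commute[of \<beta>2] Cc_commute[of "\<alpha>2-\<beta>2"] Beta_commute[of \<beta>2] Beta_commute[of "\<alpha>2-\<beta>2"])
  define C where "C = M / B"
  have C1: "C \<ge> 1" unfolding C_def using MB Bpos by simp
  have Aeq: "min (\<beta>1 powr \<beta>1 * \<beta>2 powr \<beta>2 / (\<beta>1 + \<beta>2) powr (\<beta>1 + \<beta>2) * Beta \<gamma>1 \<gamma>2 / Beta \<alpha>1 \<alpha>2)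
               (\<gamma>1 powr \<gamma>1 * \<gamma>2 powr \<gamma>2 / (\<gamma>1 + \<gamma>2) powr (\<gamma>1 + \<gamma>2) * Beta \<beta>1 \<beta>2 / Beta \<alpha>1 \<alpha>2) = C"
    unfolding C_def M_def B_def[symmetric] Cc_def using Bpos by (simp add: min_divide_distrib_right)
  define W1 where "W1 = wnorm \<beta>1 \<nu>1"
  define W2 where "W2 = wnorm \<beta>2 \<nu>2"
  define w where "w \<tau> = ennreal ((1+\<tau>) powr (-(\<beta>1+\<beta>2)))" for \<tau> :: real
  have wm[measurable]: "w \<in> borel_measurable borel" unfolding w_def[abs_def] by measurable
  define Ia where "Ia = (\<integral>\<^sup>+\<tau>. ennreal (cmod (u \<tau>)) * w \<tau> \<partial>lborel)"
  define Ib where "Ib = (\<integral>\<^sup>+\<tau>. ennreal (measure \<nu>1 {\<tau>}) * w \<tau> \<partial>\<nu>2)"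
  have T: "wnorm (\<beta>1 + \<beta>2) \<nu> = Ia + Ib"
  proof -
    have "wnorm (\<beta>1 + \<beta>2) \<nu> = (\<integral>\<^sup>+\<tau>. w \<tau> \<partial>\<mu>a) + (\<integral>\<^sup>+\<tau>. w \<tau> \<partial>\<mu>b)"
      unfolding wnorm_def \<nu>_def w_def by (rule nn_integral_addm[OF sa sb]) measurable
    also have "(\<integral>\<^sup>+\<tau>. w \<tau> \<partial>\<mu>a) = Ia" unfolding \<mu>a_def Ia_def
      by (rule nn_integral_density) auto
    also have "(\<integral>\<^sup>+\<tau>. w \<tau> \<partial>\<mu>b) = Ib" unfolding \<mu>b_def Ib_def
      by (rule nn_integral_density) auto
    finally show ?thesis .
  qed
  have main: "wnorm (\<beta>1 + \<beta>2) \<nu> \<le> ennreal C * W1 * W2"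
  proof -
    define Y1 where "Y1 \<tau> = (\<integral>\<^sup>+t. \<integral>\<^sup>+s. Fk (\<beta>2+\<beta>1) \<alpha>2 \<alpha>1 \<tau> t s \<partial>\<nu>1 \<partial>\<nu>2)" for \<tau>
    define Y2 where "Y2 \<tau> = (\<integral>\<^sup>+t. \<integral>\<^sup>+s. Fk (\<beta>1+\<beta>2) \<alpha>1 \<alpha>2 \<tau> t s \<partial>\<nu>2 \<partial>\<nu>1)" for \<tau>
    have Y1m[measurable]: "Y1 \<in> borel_measurable borel" unfolding Y1_def[abs_def] Fk_def K_def by measurable
    have Y2m[measurable]: "Y2 \<in> borel_measurable borel" unfolding Y2_def[abs_def] Fk_def K_def by measurable
    have pt: "ennreal (cmod (u \<tau>)) * w \<tau> \<le> ennreal (1/B) * (Y1 \<tau> + Y2 \<tau>)" for \<tau>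
    proof -
      let ?c = "(1+\<tau>) powr (-(\<beta>1+\<beta>2))"
      have c0: "?c \<ge> 0" by simp
      have "cmod (u \<tau>) \<le> (cmod (stint \<alpha>2 \<alpha>1 \<nu>1 h1 \<nu>2 h2 \<tau>) + cmod (stint \<alpha>1 \<alpha>2 \<nu>2 h2 \<nu>1 h1 \<tau>)) / B"
        unfolding u_def sconv_density_def B_def[symmetric] using Bpos
        by (simp add: norm_divide divide_right_mono norm_triangle_ineq)
      then have "cmod (u \<tau>) * ?c \<le> ((cmod (stint \<alpha>2 \<alpha>1 \<nu>1 h1 \<nu>2 h2 \<tau>) + cmod (stint \<alpha>1 \<alpha>2 \<nu>2 h2 \<nu>1 h1 \<tau>)) / B) * ?c"
        using c0 by (rule mult_right_mono)
      also have "\<dots> = (1/B) * (?c * cmod (stint \<alpha>2 \<alpha>1 \<nu>1 h1 \<nu>2 h2 \<tau>) + ?c * cmod (stint \<alpha>1 \<alpha>2 \<nu>2 h2 \<nu>1 h1 \<tau>))"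
        by (simp add: field_simps)
      finally have "cmod (u \<tau>) * ?c \<le> (1/B) * (?c * cmod (stint \<alpha>2 \<alpha>1 \<nu>1 h1 \<nu>2 h2 \<tau>) + ?c * cmod (stint \<alpha>1 \<alpha>2 \<nu>2 h2 \<nu>1 h1 \<tau>))" .
      then have "ennreal (cmod (u \<tau>)) * w \<tau> \<le> ennreal ((1/B) * (?c * cmod (stint \<alpha>2 \<alpha>1 \<nu>1 h1 \<nu>2 h2 \<tau>) + ?c * cmod (stint \<alpha>1 \<alpha>2 \<nu>2 h2 \<nu>1 h1 \<tau>)))"
        unfolding w_def by (subst ennreal_mult[symmetric]) (auto intro: ennreal_leI)
      also have "\<dots> = ennreal (1/B) * (ennreal ((1+\<tau>) powr (-(\<beta>2+\<beta>1))) * ennreal (cmod (stint \<alpha>2 \<alpha>1 \<nu>1 h1 \<nu>2 h2 \<tau>))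
          + ennreal ?c * ennreal (cmod (stint \<alpha>1 \<alpha>2 \<nu>2 h2 \<nu>1 h1 \<tau>)))"
      proof -
        define X where "X = ?c * cmod (stint \<alpha>2 \<alpha>1 \<nu>1 h1 \<nu>2 h2 \<tau>)"
        define Y where "Y = ?c * cmod (stint \<alpha>1 \<alpha>2 \<nu>2 h2 \<nu>1 h1 \<tau>)"
        have XY: "X \<ge> 0" "Y \<ge> 0" unfolding X_def Y_def by auto
        have e1: "ennreal ((1/B) * (X + Y)) = ennreal (1/B) * ennreal (X + Y)"
          by (rule ennreal_mult) (use Bpos XY in auto)
        have e2: "ennreal (X + Y) = ennreal X + ennreal Y"
          by (rule ennreal_plus) (use XY in auto)
        have "ennreal ((1/B) * (X + Y)) = ennreal (1/B) * (ennreal X + ennreal Y)"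
          unfolding e1 e2 ..
        moreover have "ennreal X = ennreal ((1+\<tau>) powr (-(\<beta>2+\<beta>1))) * ennreal (cmod (stint \<alpha>2 \<alpha>1 \<nu>1 h1 \<nu>2 h2 \<tau>))"
          unfolding X_def by (simp add: ennreal_mult add.commute)
        moreover have "ennreal Y = ennreal ?c * ennreal (cmod (stint \<alpha>1 \<alpha>2 \<nu>2 h2 \<nu>1 h1 \<tau>))"
          unfolding Y_def by (simp add: ennreal_mult)
        ultimately show ?thesis unfolding X_def Y_def by simp
      qed
      also have "\<dots> \<le> ennreal (1/B) * (Y1 \<tau> + Y2 \<tau>)"
        unfolding Y1_def Y2_def
      proof (rule mult_left_mono[OF add_mono])
        show "ennreal ((1+\<tau>) powr (-(\<beta>2+\<beta>1))) * ennreal (cmod (stint \<alpha>2 \<alpha>1 \<nu>1 h1 \<nu>2 h2 \<tau>))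
          \<le> (\<integral>\<^sup>+t. \<integral>\<^sup>+s. Fk (\<beta>2+\<beta>1) \<alpha>2 \<alpha>1 \<tau> t s \<partial>\<nu>1 \<partial>\<nu>2)"
          by (rule stint_Fk[OF sf1 sf2 s1 s2 hn])
        show "ennreal ?c * ennreal (cmod (stint \<alpha>1 \<alpha>2 \<nu>2 h2 \<nu>1 h1 \<tau>))
          \<le> (\<integral>\<^sup>+t. \<integral>\<^sup>+s. Fk (\<beta>1+\<beta>2) \<alpha>1 \<alpha>2 \<tau> t s \<partial>\<nu>2 \<partial>\<nu>1)"
          by (rule stint_Fk[OF sf2 sf1 s2 s1 hn(2,1)])
      qed simp
      finally show ?thesis .
    qed
    define J1 where "J1 = (\<integral>\<^sup>+t. \<integral>\<^sup>+s. Gk \<beta>1 \<beta>2 t s \<partial>\<nu>1 \<partial>\<nu>2)"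
    define J2 where "J2 = (\<integral>\<^sup>+t. \<integral>\<^sup>+s. Gk \<beta>2 \<beta>1 s t \<partial>\<nu>1 \<partial>\<nu>2)"
    define Dk where "Dk t s = (if s = t then ennreal ((1+s) powr (-\<beta>1) * (1+t) powr (-\<beta>2)) else 0)" for t s :: real
    define J3 where "J3 = (\<integral>\<^sup>+t. \<integral>\<^sup>+s. Dk t s \<partial>\<nu>1 \<partial>\<nu>2)"
    have Ia: "Ia \<le> ennreal (1/B) * (ennreal M * J1 + ennreal M * J2)"
    proof -
      have Gm1[measurable]: "case_prod (Gk \<beta>1 \<beta>2) \<in> borel_measurable (borel \<Otimes>\<^sub>M borel)"
        unfolding Gk_def by measurable
      have Gm2[measurable]: "case_prod (\<lambda>t s. Gk \<beta>2 \<beta>1 t s) \<in> borel_measurable (borel \<Otimes>\<^sub>M borel)"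
        unfolding Gk_def by measurable
      have "Ia \<le> (\<integral>\<^sup>+\<tau>. ennreal (1/B) * (Y1 \<tau> + Y2 \<tau>) \<partial>lborel)"
        unfolding Ia_def by (intro nn_integral_mono pt)
      also have "\<dots> = ennreal (1/B) * ((\<integral>\<^sup>+\<tau>. Y1 \<tau> \<partial>lborel) + (\<integral>\<^sup>+\<tau>. Y2 \<tau> \<partial>lborel))"
        by (subst nn_integral_cmult) (auto simp: nn_integral_add)
      also have "\<dots> \<le> ennreal (1/B) * (ennreal M * J1 + ennreal M * J2)"
      proof (intro mult_left_mono add_mono)
        have "(\<integral>\<^sup>+\<tau>. Y1 \<tau> \<partial>lborel) \<le> (\<integral>\<^sup>+t. \<integral>\<^sup>+s. ennreal (Mn \<alpha>2 \<alpha>1 \<beta>2 \<beta>1) * Gk \<beta>1 \<beta>2 t s \<partial>\<nu>1 \<partial>\<nu>2)"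
          unfolding Y1_def by (rule tonelli1[OF sf1 sf2 s1 s2]) (use b in auto)
        also have "\<dots> = ennreal M * J1" unfolding Mn1 J1_def
          by (rule nn_cmult2[OF sf1 s1 s2 Gm1])
        finally show "(\<integral>\<^sup>+\<tau>. Y1 \<tau> \<partial>lborel) \<le> ennreal M * J1" .
        have "(\<integral>\<^sup>+\<tau>. Y2 \<tau> \<partial>lborel) \<le> (\<integral>\<^sup>+t. \<integral>\<^sup>+s. ennreal (Mn \<alpha>1 \<alpha>2 \<beta>1 \<beta>2) * Gk \<beta>2 \<beta>1 t s \<partial>\<nu>2 \<partial>\<nu>1)"
          unfolding Y2_def by (rule tonelli1[OF sf2 sf1 s2 s1]) (use b in auto)
        also have "\<dots> = ennreal M * (\<integral>\<^sup>+t. \<integral>\<^sup>+s. Gk \<beta>2 \<beta>1 t s \<partial>\<nu>2 \<partial>\<nu>1)" unfolding Mn2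
          by (rule nn_cmult2[OF sf2 s2 s1 Gm2])
        also have "(\<integral>\<^sup>+t. \<integral>\<^sup>+s. Gk \<beta>2 \<beta>1 t s \<partial>\<nu>2 \<partial>\<nu>1) = J2" unfolding J2_def
          by (rule nn_swap[OF sf1 sf2 s1 s2 Gm2])
        finally show "(\<integral>\<^sup>+\<tau>. Y2 \<tau> \<partial>lborel) \<le> ennreal M * J2" .
      qed simp
      finally show ?thesis .
    qed
    have Ib: "Ib = J3"
      unfolding Ib_def J3_def
    proof (rule nn_integral_cong)
      fix t :: real
      have fin: "emeasure \<nu>1 {t} \<noteq> top"
      proof -
        obtain n :: nat where "\<bar>t\<bar> \<le> real n" using real_arch_simple by blast
        then have "emeasure \<nu>1 {t} \<le> emeasure \<nu>1 {- real n..real n}"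
          by (intro emeasure_mono) (auto simp: s1)
        then show ?thesis using cRadon_fin[OF R1, of n] by (auto simp: top_unique)
      qed
      have "(\<integral>\<^sup>+s. Dk t s \<partial>\<nu>1) = (\<integral>\<^sup>+s. ennreal ((1+t) powr (-\<beta>1) * (1+t) powr (-\<beta>2)) * indicator {t} s \<partial>\<nu>1)"
        unfolding Dk_def by (intro nn_integral_cong) (auto split: split_indicator)
      also have "\<dots> = ennreal ((1+t) powr (-\<beta>1) * (1+t) powr (-\<beta>2)) * emeasure \<nu>1 {t}"
        by (rule nn_integral_cmult_indicator) (simp add: s1)
      also have "\<dots> = ennreal (measure \<nu>1 {t}) * w t"
        unfolding w_def emeasure_eq_ennreal_measure[OF fin]
        by (simp add: powr_add[symmetric] mult.commute)
      finally show "ennreal (measure \<nu>1 {t}) * w t = (\<integral>\<^sup>+s. Dk t s \<partial>\<nu>1)" by simp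
    qed
    have sum: "J1 + J2 + J3 \<le> W1 * W2"
    proof -
      have m1[measurable]: "case_prod (Gk \<beta>1 \<beta>2) \<in> borel_measurable (borel \<Otimes>\<^sub>M borel)"
        unfolding Gk_def by measurable
      have m2[measurable]: "case_prod (\<lambda>t s. Gk \<beta>2 \<beta>1 s t) \<in> borel_measurable (borel \<Otimes>\<^sub>M borel)"
        unfolding Gk_def by measurable
      have m3[measurable]: "case_prod Dk \<in> borel_measurable (borel \<Otimes>\<^sub>M borel)"
        unfolding Dk_def by measurable
      have m12[measurable]: "case_prod (\<lambda>t s. Gk \<beta>1 \<beta>2 t s + Gk \<beta>2 \<beta>1 s t) \<in> borel_measurable (borel \<Otimes>\<^sub>M borel)"
        unfolding Gk_def by measurable
      have "J1 + J2 + J3 = (\<integral>\<^sup>+t. \<integral>\<^sup>+s. Gk \<beta>1 \<beta>2 t s + Gk \<beta>2 \<beta>1 s t + Dk t s \<partial>\<nu>1 \<partial>\<nu>2)"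
        unfolding J1_def J2_def J3_def
        by (simp only: nn_add2[OF sf1 s1 s2 m1 m2] nn_add2[OF sf1 s1 s2 m12 m3])
      also have "\<dots> \<le> (\<integral>\<^sup>+t. \<integral>\<^sup>+s. ennreal ((1+s) powr (-\<beta>1)) * ennreal ((1+t) powr (-\<beta>2)) \<partial>\<nu>1 \<partial>\<nu>2)"
      proof (intro nn_integral_mono)
        fix t s :: real
        consider "s < t" | "t < s" | "s = t" by linarith
        then show "Gk \<beta>1 \<beta>2 t s + Gk \<beta>2 \<beta>1 s t + Dk t s \<le> ennreal ((1+s) powr (-\<beta>1)) * ennreal ((1+t) powr (-\<beta>2))"
          by cases (auto simp: Gk_def Dk_def ennreal_mult mult.commute)
      qed
      also have "\<dots> = (\<integral>\<^sup>+t. W1 * ennreal ((1+t) powr (-\<beta>2)) \<partial>\<nu>2)"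
        unfolding W1_def wnorm_def by (intro nn_integral_cong nn_integral_multc) measurable
      also have "\<dots> = W1 * W2"
        unfolding W2_def wnorm_def by (rule nn_integral_cmult) measurable
      finally show ?thesis .
    qed
    have "wnorm (\<beta>1 + \<beta>2) \<nu> \<le> ennreal (1/B) * (ennreal M * J1 + ennreal M * J2) + J3"
      unfolding T Ib[symmetric] using Ia by (rule add_right_mono)
    also have "\<dots> = ennreal C * J1 + ennreal C * J2 + J3"
    proof -
      have eC: "ennreal (1/B) * ennreal M = ennreal C"
        unfolding C_def using Bpos MB by (subst ennreal_mult[symmetric]) auto
      show ?thesis by (simp only: distrib_left mult.assoc[symmetric] eC)
    qed
    also have "\<dots> \<le> ennreal C * J1 + ennreal C * J2 + ennreal C * J3"
    proof -
      have "1 * J3 \<le> ennreal C * J3" using C1 by (intro mult_right_mono) auto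
      then show ?thesis by simp
    qed
    also have "\<dots> = ennreal C * (J1 + J2 + J3)" by (simp add: distrib_left)
    also have "\<dots> \<le> ennreal C * (W1 * W2)" by (rule mult_left_mono[OF sum]) simp
    finally show ?thesis by (simp add: mult.assoc)
  qed
  have fin: "wnorm (\<beta>1 + \<beta>2) \<nu> < \<infinity>"
  proof -
    have "ennreal C * W1 * W2 < \<infinity>" using W1fin W2fin unfolding W1_def W2_def
      by (simp add: ennreal_mult_less_top)
    then show ?thesis using main by (rule le_less_trans[rotated])
  qed
  have sconv: "is_sconv \<alpha>1 \<alpha>2 \<nu>1 h1 \<nu>2 h2 \<nu> hh"
  proof -
    have sn: "sets \<nu> = sets borel" unfolding \<nu>_def by simp
    have c0: "\<beta>1 + \<beta>2 \<ge> 0" using b by simp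
    have finR: "emeasure \<nu> {0..R} < \<infinity>" for R
    proof -
      have "emeasure \<nu> {0..R} = (\<integral>\<^sup>+t. indicator {0..R} t * 1 \<partial>\<nu>)"
        by (simp add: sn)
      also have "\<dots> \<le> ennreal ((1+R) powr (\<beta>1+\<beta>2)) * (\<integral>\<^sup>+t. ennreal ((1+t) powr (-(\<beta>1+\<beta>2))) * 1 \<partial>\<nu>)"
        by (rule nn_weight_bound[OF c0 _ sn]) simp
      also have "\<dots> < \<infinity>" using fin unfolding wnorm_def by (simp add: ennreal_mult_less_top)
      finally show ?thesis .
    qed
    have Iafin: "Ia < \<infinity>" using fin unfolding T by simp
    have u0: "u \<tau> = 0" if "\<tau> < 0" for \<tau>
      unfolding u_def sconv_density_def using that by (simp add: stint_nonpos)
    have neg: "emeasure \<nu> {..<0} = 0"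
    proof -
      have "emeasure \<mu>a {..<0} = (\<integral>\<^sup>+\<tau>. ennreal (cmod (u \<tau>)) * indicator {..<0} \<tau> \<partial>lborel)"
        unfolding \<mu>a_def by (rule emeasure_density) auto
      also have "(\<lambda>\<tau>. ennreal (cmod (u \<tau>)) * indicator {..<0} \<tau>) = (\<lambda>\<tau>. 0)"
        by (rule ext) (auto simp: u0 split: split_indicator)
      finally have a: "emeasure \<mu>a {..<0} = 0" by simp
      have "emeasure \<mu>b {..<0} = (\<integral>\<^sup>+\<tau>. ennreal (measure \<nu>1 {\<tau>}) * indicator {..<0} \<tau> \<partial>\<nu>2)"
        unfolding \<mu>b_def by (rule emeasure_density) (auto simp: s2)
      also have "\<dots> = 0"
        by (rule nn_integral_null_set) (use R2 in \<open>auto simp: null_sets_def cRadon_def\<close>)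
      finally have "emeasure \<mu>b {..<0} = 0" .
      then show ?thesis unfolding \<nu>_def using a by (simp add: emeasure_addm[OF sa sb])
    qed
    have cR: "cRadon \<nu> hh"
      unfolding cRadon_def using sn neg finR hhm hhn by auto
    have part: "set_integrable lborel A u \<and>
        (LINT t:A|\<nu>. hh t) = (LINT \<tau>:A|lborel. u \<tau>) + (LINT \<tau>:A|\<nu>2. ptmass \<nu>1 h1 \<tau> * h2 \<tau>)"
      if A: "A \<in> sets borel" "bounded A" "A \<subseteq> {0..}" for A
    proof -
      have Am[measurable]: "A \<in> sets borel" by (rule A)
      obtain R where R: "\<And>x. x \<in> A \<Longrightarrow> \<bar>x\<bar> \<le> R" using A(2) unfolding bounded_real by auto
      have AR: "A \<subseteq> {0..R}" using R A(3) by fastforce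
      have si: "set_integrable lborel A u"
        unfolding set_integrable_def integrable_iff_bounded
      proof
        show "(\<lambda>x. indicator A x *\<^sub>R u x) \<in> borel_measurable lborel" by measurable
        have "(\<integral>\<^sup>+x. ennreal (norm (indicator A x *\<^sub>R u x)) \<partial>lborel) \<le> (\<integral>\<^sup>+x. indicator {0..R} x * ennreal (cmod (u x)) \<partial>lborel)"
          using AR by (intro nn_integral_mono) (auto split: split_indicator)
        also have "\<dots> \<le> ennreal ((1+R) powr (\<beta>1+\<beta>2)) * (\<integral>\<^sup>+x. ennreal ((1+x) powr (-(\<beta>1+\<beta>2))) * ennreal (cmod (u x)) \<partial>lborel)"
          by (rule nn_weight_bound[OF c0]) auto
        also have "(\<integral>\<^sup>+x. ennreal ((1+x) powr (-(\<beta>1+\<beta>2))) * ennreal (cmod (u x)) \<partial>lborel) = Ia"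
          unfolding Ia_def w_def by (simp add: mult.commute)
        also have "ennreal ((1+R) powr (\<beta>1+\<beta>2)) * Ia < \<infinity>" using Iafin by (simp add: ennreal_mult_less_top)
        finally show "(\<integral>\<^sup>+x. ennreal (norm (indicator A x *\<^sub>R u x)) \<partial>lborel) < \<infinity>" .
      qed
      define g where "g t = indicator A t *\<^sub>R hh t" for t
      have gm[measurable]: "g \<in> borel_measurable borel" unfolding g_def[abs_def] by measurable
      have gi: "integrable \<nu> g"
        unfolding integrable_iff_bounded
      proof
        show "g \<in> borel_measurable \<nu>" unfolding measurable_cong_sets[OF sn refl] by (rule gm)
        have "(\<integral>\<^sup>+x. ennreal (norm (g x)) \<partial>\<nu>) = (\<integral>\<^sup>+x. indicator A x \<partial>\<nu>)"
          unfolding g_def by (intro nn_integral_cong) (auto simp: hhn split: split_indicator)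
        also have "\<dots> = emeasure \<nu> A" using Am sn by simp
        also have "\<dots> \<le> emeasure \<nu> {0..R}" using AR sn by (intro emeasure_mono) auto
        also have "\<dots> < \<infinity>" by (rule finR)
        finally show "(\<integral>\<^sup>+x. ennreal (norm (g x)) \<partial>\<nu>) < \<infinity>" .
      qed
      have "(LINT t:A|\<nu>. hh t) = integral\<^sup>L \<mu>a g + integral\<^sup>L \<mu>b g"
        unfolding set_lebesgue_integral_def g_def[symmetric] using gi unfolding \<nu>_def
        by (rule integral_addm[OF sa sb])
      also have "integral\<^sup>L \<mu>a g = (LINT \<tau>:A|lborel. u \<tau>)"
      proof -
        have "integral\<^sup>L \<mu>a g = (\<integral>\<tau>. cmod (u \<tau>) *\<^sub>R g \<tau> \<partial>lborel)"
          unfolding \<mu>a_def by (rule integral_density) auto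
        also have "\<dots> = (\<integral>\<tau>. indicator A \<tau> *\<^sub>R u \<tau> \<partial>lborel)"
        proof (rule integral_cong_AE)
          show "AE \<tau> in lborel. cmod (u \<tau>) *\<^sub>R g \<tau> = indicator A \<tau> *\<^sub>R u \<tau>"
          proof (rule AE_I'[OF countable_imp_null_set_lborel[OF Ec]])
            have key: "cmod (u x) *\<^sub>R g x = indicator A x *\<^sub>R u x" if "x \<notin> E" for x
            proof (cases "u x = 0")
              case True then show ?thesis by (simp add: g_def)
            next
              case False
              then have e: "cmod (u x) *\<^sub>R (u x / complex_of_real (cmod (u x))) = u x"
                by (simp add: scaleR_conv_of_real)
              have "cmod (u x) *\<^sub>R g x = indicator A x *\<^sub>R (cmod (u x) *\<^sub>R (u x / complex_of_real (cmod (u x))))"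
                unfolding g_def hh_def using that False by (simp add: scaleR_left_commute)
              then show ?thesis unfolding e .
            qed
            show "{x \<in> space lborel. \<not> cmod (u x) *\<^sub>R g x = indicator A x *\<^sub>R u x} \<subseteq> E"
              using key by blast
          qed
        qed measurable
        finally show ?thesis unfolding set_lebesgue_integral_def .
      qed
      also have "integral\<^sup>L \<mu>b g = (LINT \<tau>:A|\<nu>2. ptmass \<nu>1 h1 \<tau> * h2 \<tau>)"
      proof -
        have "integral\<^sup>L \<mu>b g = (\<integral>\<tau>. measure \<nu>1 {\<tau>} *\<^sub>R g \<tau> \<partial>\<nu>2)"
          unfolding \<mu>b_def by (rule integral_density) auto
        also have "\<dots> = (\<integral>\<tau>. indicator A \<tau> *\<^sub>R (ptmass \<nu>1 h1 \<tau> * h2 \<tau>) \<partial>\<nu>2)"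
        proof (rule Bochner_Integration.integral_cong[OF refl])
          fix x
          show "measure \<nu>1 {x} *\<^sub>R g x = indicator A x *\<^sub>R (ptmass \<nu>1 h1 x * h2 x)"
          proof (cases "x \<in> E")
            case True
            then show ?thesis unfolding g_def hh_def ptmass_def
              by (simp add: scaleR_conv_of_real mult_ac)
          next
            case False
            then have "measure \<nu>1 {x} = 0" unfolding E_def by simp
            then show ?thesis unfolding g_def hh_def ptmass_def by simp
          qed
        qed
        finally show ?thesis unfolding set_lebesgue_integral_def .
      qed
      finally have "(LINT t:A|\<nu>. hh t) = (LINT \<tau>:A|lborel. u \<tau>) + (LINT \<tau>:A|\<nu>2. ptmass \<nu>1 h1 \<tau> * h2 \<tau>)" .
      then show ?thesis using si by simp
    qed
    show ?thesis unfolding is_sconv_def u_def[symmetric] using cR part by blast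
  qed
  show ?thesis
    by (intro exI[of _ \<nu>] exI[of _ hh] conjI sconv fin) (use main Aeq in \<open>simp add: W1_def W2_def\<close>)
qed

end
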